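(* Let $\Gamma\subset PSL(2,\mathbb{R})$ be a cocompact lattice with $S=\mathbb{D}/\Gamma$ a compact Riemann surface, and let $(M,\mathcal{F})$, $S_1$, $S_2$ be as described in the context. Then the support of any harmonic measure for $(M,\mathcal{F})$ is contained in $S_1\cup S_2$.
   Context: $PSL(2,\mathbb{R})\cong PSU(1,1)$ acts on $\mathbb{D}$ and on $S^1=\partial\mathbb{D}$ by Möbius maps. Identify $S^1\times(0,2\pi)$ with the space of arcs via $(\zeta,\theta)\mapsto\{\zeta e^{it\theta}:0\le t\le1\}$; $g\in PSL(2,\mathbb{R})$ acts by sending the arc $I$ to the arc $g(I)$ (starting point $g(\zeta)$, angular length that of $g(I)$), and this action extends continuously to $X_0=S^1\times[0,2\pi]$ by $g(\zeta,0)=(g(\zeta),0)$, $g(\zeta,2\pi)=(g(\zeta),2\pi)$. Let $X_1\cong S^2$ be obtained from $X_0$ by collapsing each of the circles $S^1\times\{0\}$ and $S^1\times\{2\pi\}$ to a point (the poles); the action descends to $X_1$. Let $M=(\mathbb{D}\times X_1)/\Gamma$, where $\gamma$ acts by $(z,x)\mapsto(\gamma^{-1}z,\gamma^{-1}x)$, foliated by the images $\mathcal{F}$ of $\mathbb{D}\times\{x\}$ with the hyperbolic metric; $S_1,S_2$ are the compact leaves that are images of $\mathbb{D}\times\{\text{pole}\}$. A harmonic measure is a finite positive Borel measure $m$ on $M$ with $\int_M\Delta h\,dm=0$ for every continuous function $h$ smooth along leaves (leafwise derivatives continuous on $M$), $\Delta$ the leafwise Laplacian. *)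

theory Defs
  imports "HOL-Analysis.Analysis"
begin

text \<open>An element of SU(1,1) is represented by a pair (a,b) with |a|^2-|b|^2=1, standing
for the matrix [[a,b],[cnj b, cnj a]]; it acts on the disc and the circle by the Moebius
map below.  A subgroup of PSU(1,1) is represented by its full preimage in SU(1,1).\<close>

definition su11 :: "(complex \<times> complex) set" where
  "su11 = {(a,b). (cmod a)^2 - (cmod b)^2 = 1}"

definition mob :: "complex \<times> complex \<Rightarrow> complex \<Rightarrow> complex" where
  "mob g z = (fst g * z + snd g) / (cnj (snd g) * z + cnj (fst g))"

definition gmul :: "complex \<times> complex \<Rightarrow> complex \<times> complex \<Rightarrow> complex \<times> complex" where
  "gmul g h = (fst g * fst h + snd g * cnj (snd h), fst g * snd h + snd g * cnj (fst h))"

definition ginv :: "complex \<times> complex \<Rightarrow> complex \<times> complex" where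
  "ginv g = (cnj (fst g), - snd g)"

definition disc :: "complex set" where
  "disc = ball 0 1"

text \<open>Gamma is a cocompact lattice with D/Gamma a compact Riemann surface: a discrete
subgroup of PSU(1,1) acting freely on the disc with compact quotient.\<close>

definition cocompact_surface_group :: "(complex \<times> complex) set \<Rightarrow> bool" where
  "cocompact_surface_group G \<longleftrightarrow>
     G \<subseteq> su11 \<and> (1,0) \<in> G \<and> (-1,0) \<in> G \<and>
     (\<forall>g\<in>G. \<forall>h\<in>G. gmul g h \<in> G) \<and> (\<forall>g\<in>G. ginv g \<in> G) \<and>
     (\<forall>g\<in>G. \<exists>e>0. \<forall>h\<in>G. dist h g < e \<longrightarrow> h = g) \<and>
     (\<forall>g\<in>G. g \<notin> {(1,0), (-1,0)} \<longrightarrow> (\<forall>z\<in>disc. mob g z \<noteq> z)) \<and>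
     (\<exists>K. compact K \<and> K \<subseteq> disc \<and> (\<Union>g\<in>G. mob g ` K) = disc)"

section \<open>The space of arcs X1, realised as the unit sphere in C x R\<close>

definition X1 :: "(complex \<times> real) set" where
  "X1 = {(w,t). (cmod w)^2 + t^2 = 1}"

text \<open>The arc (zeta,theta), 0<theta<2pi, corresponds to the point
(sin(theta/2) zeta, cos(theta/2)); theta=0 and theta=2pi collapse to the poles (0,1), (0,-1).\<close>

definition arcpt :: "complex \<Rightarrow> real \<Rightarrow> complex \<times> real" where
  "arcpt \<zeta> \<theta> = (of_real (sin (\<theta>/2)) * \<zeta>, cos (\<theta>/2))"

definition arcset :: "complex \<Rightarrow> real \<Rightarrow> complex set" where
  "arcset \<zeta> \<theta> = {\<zeta> * cis (t * \<theta>) | t. t \<in> {0..1}}"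

definition pole1 :: "complex \<times> real" where "pole1 = (0, 1)"
definition pole2 :: "complex \<times> real" where "pole2 = (0, -1)"

definition arcact :: "complex \<times> complex \<Rightarrow> complex \<times> real \<Rightarrow> complex \<times> real" where
  "arcact g x =
     (if x = pole1 \<or> x = pole2 then x
      else (let \<zeta> = fst x / of_real (cmod (fst x)); \<theta> = 2 * arccos (snd x) in
        (THE y. \<exists>\<zeta>' \<theta>'. cmod \<zeta>' = 1 \<and> 0 < \<theta>' \<and> \<theta>' < 2 * pi \<and>
            arcset \<zeta>' \<theta>' = mob g ` arcset \<zeta> \<theta> \<and> y = arcpt \<zeta>' \<theta>')))"

definition Ytot :: "(complex \<times> (complex \<times> real)) set" where
  "Ytot = disc \<times> X1"

definition gact :: "complex \<times> complex \<Rightarrow> complex \<times> (complex \<times> real) \<Rightarrow> complex \<times> (complex \<times> real)" where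
  "gact g p = (mob (ginv g) (fst p), arcact (ginv g) (snd p))"

definition Mproj :: "(complex \<times> complex) set \<Rightarrow> complex \<times> (complex \<times> real)
                     \<Rightarrow> (complex \<times> (complex \<times> real)) set" where
  "Mproj G p = {q. \<exists>g\<in>G. q = gact g p}"

definition Mspace :: "(complex \<times> complex) set \<Rightarrow> (complex \<times> (complex \<times> real)) set set" where
  "Mspace G = Mproj G ` Ytot"

definition Mtop :: "(complex \<times> complex) set \<Rightarrow> (complex \<times> (complex \<times> real)) set topology" where
  "Mtop G = topology (\<lambda>U. U \<subseteq> Mspace G \<and> openin (top_of_set Ytot) (\<Union>U))"

definition leafS1 :: "(complex \<times> complex) set \<Rightarrow> (complex \<times> (complex \<times> real)) set set" where
  "leafS1 G = Mproj G ` (disc \<times> {pole1})"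

definition leafS2 :: "(complex \<times> complex) set \<Rightarrow> (complex \<times> (complex \<times> real)) set set" where
  "leafS2 G = Mproj G ` (disc \<times> {pole2})"

definition ldir :: "bool \<Rightarrow> complex" where
  "ldir b = (if b then 1 else \<i>)"

primrec ldiff :: "bool list \<Rightarrow> (complex \<times> 'x \<Rightarrow> real) \<Rightarrow> complex \<times> 'x \<Rightarrow> real" where
  "ldiff [] F = F"
| "ldiff (b # ws) F = (\<lambda>p. deriv (\<lambda>t::real. ldiff ws F (fst p + ldir b * of_real t, snd p)) 0)"

definition leaf_smooth :: "(complex \<times> (complex \<times> real) \<Rightarrow> real) \<Rightarrow> bool" where
  "leaf_smooth F \<longleftrightarrow>
     (\<forall>ws. continuous_on Ytot (ldiff ws F) \<and>
        (\<forall>b. \<forall>p\<in>Ytot. (\<lambda>t::real. ldiff ws F (fst p + ldir b * of_real t, snd p)) differentiable (at 0)))"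

text \<open>Laplacian of the hyperbolic metric 4|dz|^2/(1-|z|^2)^2 along the leaf.\<close>

definition hlap :: "(complex \<times> (complex \<times> real) \<Rightarrow> real) \<Rightarrow> complex \<times> (complex \<times> real) \<Rightarrow> real" where
  "hlap F p = ((1 - (cmod (fst p))^2)^2 / 4) * (ldiff [True, True] F p + ldiff [False, False] F p)"

definition lapM :: "(complex \<times> complex) set \<Rightarrow> ((complex \<times> (complex \<times> real)) set \<Rightarrow> real)
                    \<Rightarrow> (complex \<times> (complex \<times> real)) set \<Rightarrow> real" where
  "lapM G h c = hlap (h \<circ> Mproj G) (SOME p. p \<in> c \<inter> Ytot)"

definition harmonic_measure :: "(complex \<times> complex) set \<Rightarrow> (complex \<times> (complex \<times> real)) set measure \<Rightarrow> bool" where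
  "harmonic_measure G m \<longleftrightarrow>
     finite_measure m \<and> space m = Mspace G \<and>
     sets m = sigma_sets (Mspace G) {U. openin (Mtop G) U} \<and>
     (\<forall>h. continuous_map (Mtop G) euclideanreal h \<and> leaf_smooth (h \<circ> Mproj G)
          \<longrightarrow> integral\<^sup>L m (lapM G h) = 0)"

definition msupport :: "(complex \<times> complex) set \<Rightarrow> (complex \<times> (complex \<times> real)) set measure
                        \<Rightarrow> (complex \<times> (complex \<times> real)) set set" where
  "msupport G m = {c \<in> Mspace G. \<forall>U. openin (Mtop G) U \<and> c \<in> U \<longrightarrow> emeasure m U > 0}"

end

theory Submission
  imports Defs
begin

definition Dn :: "complex \<times> complex \<Rightarrow> complex \<Rightarrow> complex" where
  "Dn g w = cnj (snd g) * w + cnj (fst g)"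

lemma su11_rel: "g \<in> su11 \<Longrightarrow> fst g * cnj (fst g) - snd g * cnj (snd g) = 1"
proof -
  assume "g \<in> su11"
  then have "(cmod (fst g))^2 - (cmod (snd g))^2 = 1" by (auto simp: su11_def)
  then have "complex_of_real ((cmod (fst g))^2 - (cmod (snd g))^2) = 1" by simp
  then show ?thesis by (simp add: complex_norm_square[symmetric])
qed

lemma su11_abs: "g \<in> su11 \<Longrightarrow> cmod (snd g) < cmod (fst g)"
proof -
  assume "g \<in> su11"
  then have "(cmod (fst g))^2 = 1 + (cmod (snd g))^2" by (auto simp: su11_def)
  then have "(cmod (snd g))^2 < (cmod (fst g))^2" by simp
  then show ?thesis using power_less_imp_less_base by fastforce
qed

lemma Dn_nonzero: assumes "g \<in> su11" "cmod w \<le> 1" shows "Dn g w \<noteq> 0"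
proof
  assume "Dn g w = 0"
  then have "cmod (cnj (fst g)) = cmod (cnj (snd g) * w)" unfolding Dn_def
    by (metis add.commute add_eq_0_iff norm_minus_cancel)
  also have "\<dots> \<le> cmod (snd g)" using assms(2) by (simp add: norm_mult mult_left_le)
  finally show False using su11_abs[OF assms(1)] by simp
qed

lemma mob_Dn: "mob g w = (fst g * w + snd g) / Dn g w"
  by (simp add: mob_def Dn_def)

lemma mob_diff: assumes "g \<in> su11" "Dn g w1 \<noteq> 0" "Dn g w2 \<noteq> 0"
  shows "mob g w1 - mob g w2 = (w1 - w2) / (Dn g w1 * Dn g w2)"
proof -
  obtain a b where g: "g = (a,b)" by force
  have r: "a * cnj a - b * cnj b = 1" using su11_rel[OF assms(1)] g by simp
  have "(a*w1+b) * (cnj b * w2 + cnj a) - (a*w2+b)*(cnj b * w1 + cnj a) = (a * cnj a - b * cnj b)*(w1 - w2)"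
    by algebra
  then show ?thesis using assms(2,3) r unfolding mob_Dn g by (simp add: Dn_def field_simps)
qed

lemma one_minus_mob: assumes "g \<in> su11" "Dn g z \<noteq> 0"
  shows "1 - (cmod (mob g z))^2 = (1 - (cmod z)^2) / (cmod (Dn g z))^2"
proof -
  obtain a b where g: "g = (a,b)" by force
  have r: "a * cnj a - b * cnj b = 1" using su11_rel[OF assms(1)] g by simp
  have e0: "(cnj b * z + cnj a) * (b * cnj z + a) - (a*z+b)*(cnj a * cnj z + cnj b) = (a * cnj a - b * cnj b) * (1 - z * cnj z)"
    by algebra
  have e: "complex_of_real ((cmod (Dn g z))^2 - (cmod (fst g * z + snd g))^2) = 1 - complex_of_real ((cmod z)^2)"
    unfolding of_real_diff complex_norm_square g Dn_def using e0 r by simp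
  have "(cmod (Dn g z))^2 - (cmod (fst g * z + snd g))^2 = 1 - (cmod z)^2"
    using e by (metis of_real_1 of_real_diff of_real_eq_iff)
  then show ?thesis using assms(2) unfolding mob_Dn
    by (simp add: norm_divide power_divide field_simps)
qed

lemma mob_unit: assumes "g \<in> su11" "cmod w = 1" shows "cmod (mob g w) = 1"
proof -
  have "Dn g w \<noteq> 0" using Dn_nonzero assms by simp
  then have "1 - (cmod (mob g w))^2 = 0" using one_minus_mob[OF assms(1)] assms(2) by simp
  then show ?thesis by (simp add: power2_eq_1_iff) (smt (verit) norm_ge_zero)
qed

lemma mob_disc: assumes "g \<in> su11" "cmod z < 1" shows "cmod (mob g z) < 1"
proof -
  have d: "Dn g z \<noteq> 0" using Dn_nonzero assms by simp
  have "(cmod z)^2 < 1" using assms(2) by (simp add: power_less_one_iff abs_square_less_1)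
  then have "0 < 1 - (cmod (mob g z))^2" using one_minus_mob[OF assms(1) d] d by simp
  then show ?thesis by (simp add: abs_square_less_1)
qed

lemma mob_unit_form: assumes "g \<in> su11" "cmod w = 1"
  shows "mob g w = w * cnj (Dn g w) / Dn g w"
proof -
  have "w * cnj w = 1" using assms(2) by (metis complex_norm_square mult.commute of_real_1 power_one)
  then have "w * cnj (Dn g w) = fst g * w + snd g" unfolding Dn_def
    by (simp add: algebra_simps)
  then show ?thesis by (simp add: mob_Dn)
qed

lemma ginv_su11: "g \<in> su11 \<Longrightarrow> ginv g \<in> su11"
  by (simp add: su11_def ginv_def case_prod_unfold)

lemma gmul_su11: assumes "g \<in> su11" "h \<in> su11" shows "gmul g h \<in> su11"
proof -
  obtain a b where g: "g = (a,b)" by force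
  obtain c d where h: "h = (c,d)" by force
  have r1: "a * cnj a - b * cnj b = 1" using su11_rel[OF assms(1)] g by simp
  have r2: "c * cnj c - d * cnj d = 1" using su11_rel[OF assms(2)] h by simp
  have e: "(a*c + b * cnj d) * cnj (a*c + b * cnj d) - (a*d + b * cnj c) * cnj (a*d + b * cnj c)
     = (a * cnj a - b * cnj b) * (c * cnj c - d * cnj d)" by (simp add: algebra_simps)
  have "complex_of_real ((cmod (a*c + b * cnj d))^2 - (cmod (a*d + b * cnj c))^2) = 1"
    unfolding of_real_diff complex_norm_square using e r1 r2 by simp
  then have "(cmod (a*c + b * cnj d))^2 - (cmod (a*d + b * cnj c))^2 = 1"
    by (metis of_real_1 of_real_eq_iff)
  then show ?thesis by (simp add: su11_def gmul_def g h)
qed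

lemma Dn_gmul: assumes "g \<in> su11" "h \<in> su11" "Dn h w \<noteq> 0"
  shows "Dn (gmul g h) w = Dn g (mob h w) * Dn h w"
  using assms(3) unfolding Dn_def mob_Dn gmul_def
  by (simp add: field_simps Dn_def)

lemma frac_lemma: "(D::complex) \<noteq> 0 \<Longrightarrow> (a*(N/D)+b)/(c*(N/D)+d) = (a*N+b*D)/(c*N+d*D)"
proof -
  assume D: "D \<noteq> 0"
  have 1: "a*(N/D)+b = (a*N+b*D)/D" using D by (simp add: field_simps)
  have 2: "c*(N/D)+d = (c*N+d*D)/D" using D by (simp add: field_simps)
  show ?thesis unfolding 1 2 using D by simp
qed

lemma mob_gmul: assumes "g \<in> su11" "h \<in> su11" "Dn h w \<noteq> 0"
  shows "mob (gmul g h) w = mob g (mob h w)"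
proof -
  have "mob g (mob h w) = (fst g * (fst h * w + snd h) + snd g * Dn h w) / (cnj (snd g) * (fst h * w + snd h) + cnj (fst g) * Dn h w)"
    unfolding mob_def[of g] mob_Dn[of h] using frac_lemma[OF assms(3)] by simp
  then show ?thesis unfolding mob_def gmul_def Dn_def by (simp add: algebra_simps)
qed

lemma mob_id: "mob (1,0) w = w" by (simp add: mob_def)

lemma gmul_ginv: "g \<in> su11 \<Longrightarrow> gmul g (ginv g) = (1,0)"
  using su11_rel[of g] by (simp add: gmul_def ginv_def algebra_simps)

lemma ginv_gmul: "g \<in> su11 \<Longrightarrow> gmul (ginv g) g = (1,0)"
  using su11_rel[of g] by (simp add: gmul_def ginv_def algebra_simps)

lemma ginv_ginv: "ginv (ginv g) = g" by (simp add: ginv_def)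

lemma ginv_gmul_distrib: "ginv (gmul g h) = gmul (ginv h) (ginv g)"
  by (simp add: gmul_def ginv_def algebra_simps)

lemma mob_inv: assumes "g \<in> su11" "cmod w \<le> 1" shows "mob (ginv g) (mob g w) = w"
proof -
  have "Dn g w \<noteq> 0" using Dn_nonzero assms by simp
  then have "mob (gmul (ginv g) g) w = mob (ginv g) (mob g w)"
    using mob_gmul[OF ginv_su11[OF assms(1)] assms(1)] by simp
  then show ?thesis using ginv_gmul[OF assms(1)] mob_id by simp
qed

lemma mob_inv': assumes "g \<in> su11" "cmod w \<le> 1" shows "mob g (mob (ginv g) w) = w"
  using mob_inv[OF ginv_su11[OF assms(1)] assms(2)] by (simp add: ginv_ginv)

definition Xf :: "complex \<Rightarrow> complex \<Rightarrow> complex \<Rightarrow> complex" where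
  "Xf a w b = (w - a)*(b - w)*(a - b)/(a*w*b)"

lemma cis_diff_inv: "cis x - cis (-x) = 2 * \<i> * of_real (sin x)"
  by (simp add: complex_eq_iff)

lemma X_cis: assumes "\<zeta> \<noteq> 0"
  shows "Xf \<zeta> (\<zeta>*cis t) (\<zeta>*cis \<theta>) = \<i> * of_real (8 * sin (t/2) * sin ((\<theta>-t)/2) * sin (\<theta>/2))"
proof -
  define A where "A = cis (t/2)"
  define B where "B = cis (\<theta>/2)"
  have A0: "A \<noteq> 0" "B \<noteq> 0" by (auto simp: A_def B_def)
  have ct: "cis t = A*A" unfolding A_def by (simp add: cis_mult)
  have cth: "cis \<theta> = B*B" unfolding B_def by (simp add: cis_mult)
  have s1: "2 * \<i> * of_real (sin (t/2)) = A - inverse A"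
    unfolding A_def cis_diff_inv[symmetric] by (simp add: cis_inverse)
  have s3: "2 * \<i> * of_real (sin (\<theta>/2)) = B - inverse B"
    unfolding B_def cis_diff_inv[symmetric] by (simp add: cis_inverse)
  have s2: "2 * \<i> * of_real (sin ((\<theta>-t)/2)) = B / A - A / B"
    unfolding A_def B_def cis_diff_inv[symmetric] by (simp add: cis_divide diff_divide_distrib)
  have "\<i> * of_real (8 * sin (t/2) * sin ((\<theta>-t)/2) * sin (\<theta>/2))
      = - ((2 * \<i> * of_real (sin (t/2))) * (2 * \<i> * of_real (sin ((\<theta>-t)/2))) * (2 * \<i> * of_real (sin (\<theta>/2))))"
    by (simp add: algebra_simps)
  also have "\<dots> = - ((A - inverse A) * (B / A - A / B) * (B - inverse B))" unfolding s1 s2 s3 ..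
  also have "\<dots> = Xf \<zeta> (\<zeta>*cis t) (\<zeta>*cis \<theta>)"
    unfolding Xf_def ct cth using A0 assms by (simp add: field_simps)
  finally show ?thesis by simp
qed

lemma unit_cis_rep: assumes "cmod y = 1" obtains t where "0 \<le> t" "t < 2*pi" "y = cis t"
proof -
  have y0: "y \<noteq> 0" using assms by auto
  have c: "cis (Arg y) = y" using cis_Arg[OF y0] assms by (simp add: sgn_div_norm)
  have r: "- pi < Arg y" "Arg y \<le> pi" using Arg_bounded by auto
  show ?thesis
  proof (cases "0 \<le> Arg y")
    case True then show ?thesis using that[of "Arg y"] c r by (auto simp: pi_gt_zero)
  next
    case False
    have "cis (Arg y + 2*pi) = y" using c by (simp add: cis_mult[symmetric])
    then show ?thesis using that[of "Arg y + 2*pi"] False r by auto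
  qed
qed

lemma arcset_alt: assumes "0 < \<theta>" shows "arcset \<zeta> \<theta> = {\<zeta> * cis t | t. 0 \<le> t \<and> t \<le> \<theta>}"
proof -
  have "\<zeta> * cis (s*\<theta>) \<in> {\<zeta> * cis t | t. 0 \<le> t \<and> t \<le> \<theta>}" if "s \<in> {0..1}" for s
    using that assms by (auto intro!: exI[of _ "s*\<theta>"] simp: mult_le_cancel_right1)
  moreover have "\<zeta> * cis t \<in> arcset \<zeta> \<theta>" if "0 \<le> t" "t \<le> \<theta>" for t
    using that assms unfolding arcset_def by (auto intro!: exI[of _ "t/\<theta>"])
  ultimately show ?thesis unfolding arcset_def by blast
qed

lemma sin_half_pos: "0 < x \<Longrightarrow> x < 2*pi \<Longrightarrow> 0 < sin (x/2)"
  by (intro sin_gt_zero) auto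

lemma cis_eq_imp: assumes "cis x = cis y" shows "\<exists>k::int. x - y = 2*pi*k"
proof -
  have "cis (x - y) = 1" using assms by (simp add: cis_divide[symmetric])
  then have "cos (x-y) = 1" by (simp add: complex_eq_iff)
  then obtain k::int where "x - y = 2*pi*k" using cos_one_2pi_int by (metis mult.assoc mult.commute)
  then show ?thesis by blast
qed

lemma cis_eq_in_range: assumes "cis x = cis y" "0 \<le> x" "x < 2*pi" "0 \<le> y" "y < 2*pi" shows "x = y"
proof -
  obtain k::int where k: "x - y = 2*pi*k" using cis_eq_imp[OF assms(1)] by blast
  have "\<bar>x - y\<bar> < 2*pi" using assms by auto
  then have "2*pi*\<bar>real_of_int k\<bar> < 2*pi*1" using k by (simp add: abs_mult)
  then have "\<bar>real_of_int k\<bar> < 1" using pi_gt_zero by (simp only: mult_less_cancel_left_pos)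
  then have "k = 0" by linarith
  then show ?thesis using k by simp
qed

lemma arc_char: assumes "cmod \<zeta> = 1" "0 < \<theta>" "\<theta> < 2*pi"
  shows "arcset \<zeta> \<theta> = {w. cmod w = 1 \<and> (w = \<zeta> \<or> w = \<zeta> * cis \<theta> \<or> 0 < Im (Xf \<zeta> w (\<zeta> * cis \<theta>)))}"
proof -
  have z0: "\<zeta> \<noteq> 0" using assms by auto
  have key: "0 < Im (Xf \<zeta> (\<zeta> * cis t) (\<zeta> * cis \<theta>)) \<longleftrightarrow> t < \<theta>" if "0 < t" "t < 2*pi" for t
  proof -
    have p1: "0 < sin (t/2)" "0 < sin (\<theta>/2)" using sin_half_pos that assms by auto
    have "0 < sin ((\<theta>-t)/2) \<longleftrightarrow> t < \<theta>"
    proof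
      assume "0 < sin ((\<theta>-t)/2)"
      show "t < \<theta>"
      proof (rule ccontr)
        assume "\<not> t < \<theta>"
        then have "sin ((t-\<theta>)/2) \<ge> 0" using that assms by (intro sin_ge_zero) auto
        then have "sin ((\<theta>-t)/2) \<le> 0" by (metis minus_diff_eq minus_divide_left neg_0_le_iff_le sin_minus)
        then show False using \<open>0 < sin ((\<theta>-t)/2)\<close> by simp
      qed
    next
      assume "t < \<theta>" then show "0 < sin ((\<theta>-t)/2)" using that assms by (intro sin_gt_zero) auto
    qed
    then show ?thesis unfolding X_cis[OF z0] using p1 by (simp add: zero_less_mult_iff)
  qed
  show ?thesis
  proof (intro set_eqI iffI)
    fix w assume "w \<in> arcset \<zeta> \<theta>"
    then obtain t where t: "0 \<le> t" "t \<le> \<theta>" "w = \<zeta> * cis t" using arcset_alt assms by auto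
    have "cmod w = 1" using t assms by (simp add: norm_mult)
    moreover have "w = \<zeta> \<or> w = \<zeta> * cis \<theta> \<or> 0 < Im (Xf \<zeta> w (\<zeta> * cis \<theta>))"
    proof (cases "t = 0 \<or> t = \<theta>")
      case True then show ?thesis using t by auto
    next
      case False then show ?thesis using key[of t] t assms by auto
    qed
    ultimately show "w \<in> {w. cmod w = 1 \<and> (w = \<zeta> \<or> w = \<zeta> * cis \<theta> \<or> 0 < Im (Xf \<zeta> w (\<zeta> * cis \<theta>)))}" by blast
  next
    fix w assume w: "w \<in> {w. cmod w = 1 \<and> (w = \<zeta> \<or> w = \<zeta> * cis \<theta> \<or> 0 < Im (Xf \<zeta> w (\<zeta> * cis \<theta>)))}"
    have "cmod (w/\<zeta>) = 1" using w assms by (simp add: norm_divide)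
    then obtain t where t: "0 \<le> t" "t < 2*pi" "w/\<zeta> = cis t" using unit_cis_rep by blast
    have wt: "w = \<zeta> * cis t" using t z0 by (simp add: field_simps)
    have "t \<le> \<theta>"
    proof (cases "t = 0")
      case True then show ?thesis using assms by simp
    next
      case False
      then have tp: "0 < t" using t by simp
      { assume "w = \<zeta>" then have "cis t = cis 0" using wt z0 by simp
        then have "t = 0" using cis_eq_in_range t by auto
        then have ?thesis using False by simp }
      moreover
      { assume "w = \<zeta> * cis \<theta>" then have "cis t = cis \<theta>" using wt z0 by simp
        then have "t = \<theta>" using cis_eq_in_range t assms by auto
        then have ?thesis by simp }
      moreover
      { assume "0 < Im (Xf \<zeta> w (\<zeta> * cis \<theta>))"
        then have ?thesis using key[OF tp t(2)] wt by simp }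
      ultimately show ?thesis using w by blast
    qed
    then show "w \<in> arcset \<zeta> \<theta>" using arcset_alt assms t wt by auto
  qed
qed

lemma Xf_alg: fixes A W B cA cW cB a w b :: complex
  assumes "A \<noteq> 0" "W \<noteq> 0" "B \<noteq> 0" "cA \<noteq> 0" "cW \<noteq> 0" "cB \<noteq> 0" "a \<noteq> 0" "w \<noteq> 0" "b \<noteq> 0"
  shows "((w-a)/(W*A)) * ((b-w)/(B*W)) * ((a-b)/(A*B)) / ((a*cA/A)*(w*cW/W)*(b*cB/B))
     = (w-a)*(b-w)*(a-b)/(a*w*b) / ((A*W*B)*(cA*cW*cB))"
  using assms by (simp add: field_simps)

lemma Xf_mob: assumes g: "g \<in> su11" and u: "cmod a = 1" "cmod w = 1" "cmod b = 1"
  shows "Xf (mob g a) (mob g w) (mob g b) = Xf a w b / of_real ((cmod (Dn g a * Dn g w * Dn g b))^2)"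
proof -
  have D: "Dn g a \<noteq> 0" "Dn g w \<noteq> 0" "Dn g b \<noteq> 0" using Dn_nonzero g u by auto
  have n0: "a \<noteq> 0" "w \<noteq> 0" "b \<noteq> 0" using u by auto
  have cD: "cnj (Dn g a) \<noteq> 0" "cnj (Dn g w) \<noteq> 0" "cnj (Dn g b) \<noteq> 0" using D by auto
  have sq: "of_real ((cmod (Dn g a * Dn g w * Dn g b))^2) = (Dn g a * Dn g w * Dn g b) * (cnj (Dn g a) * cnj (Dn g w) * cnj (Dn g b))"
    unfolding complex_norm_square by simp
  have "Xf (mob g a) (mob g w) (mob g b) = ((w-a)/(Dn g w*Dn g a)) * ((b-w)/(Dn g b*Dn g w)) * ((a-b)/(Dn g a*Dn g b)) /
     ((a*cnj (Dn g a)/Dn g a)*(w*cnj (Dn g w)/Dn g w)*(b*cnj (Dn g b)/Dn g b))"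
    unfolding Xf_def mob_diff[OF g D(2) D(1)] mob_diff[OF g D(3) D(2)] mob_diff[OF g D(1) D(3)]
    unfolding mob_unit_form[OF g u(1)] mob_unit_form[OF g u(2)] mob_unit_form[OF g u(3)] ..
  also have "\<dots> = Xf a w b / of_real ((cmod (Dn g a * Dn g w * Dn g b))^2)"
    unfolding sq Xf_def by (rule Xf_alg[OF D(1) D(2) D(3) cD n0])
  finally show ?thesis .
qed

lemma Im_Xf_mob: assumes g: "g \<in> su11" and u: "cmod a = 1" "cmod w = 1" "cmod b = 1"
  shows "0 < Im (Xf (mob g a) (mob g w) (mob g b)) \<longleftrightarrow> 0 < Im (Xf a w b)"
proof -
  have D: "Dn g a \<noteq> 0" "Dn g w \<noteq> 0" "Dn g b \<noteq> 0" using Dn_nonzero g u by auto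
  then have "0 < (cmod (Dn g a * Dn g w * Dn g b))^2" by simp
  then show ?thesis unfolding Xf_mob[OF assms] by (simp add: Im_divide_of_real divide_pos_pos zero_less_divide_iff)
qed

definition angl :: "complex \<Rightarrow> real" where
  "angl y = (if 0 \<le> Arg y then Arg y else Arg y + 2*pi)"

lemma angl: assumes "cmod y = 1" shows "cis (angl y) = y" "0 \<le> angl y" "angl y < 2*pi"
proof -
  have y0: "y \<noteq> 0" using assms by auto
  have c: "cis (Arg y) = y" using cis_Arg[OF y0] assms by (simp add: sgn_div_norm)
  have r: "- pi < Arg y" "Arg y \<le> pi" using Arg_bounded by auto
  have "cis (Arg y + 2*pi) = cis (Arg y)" by (simp add: complex_eq_iff)
  then show "cis (angl y) = y" using c unfolding angl_def by (cases "0 \<le> Arg y") auto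
  show "0 \<le> angl y" "angl y < 2*pi" using r pi_gt_zero unfolding angl_def by auto
qed

lemma angl_pos: assumes "cmod y = 1" "y \<noteq> 1" shows "0 < angl y"
proof -
  have "angl y \<noteq> 0"
  proof
    assume "angl y = 0"
    then have "cis (angl y) = 1" by simp
    then show False using angl(1)[OF assms(1)] assms(2) by simp
  qed
  then show ?thesis using angl(2)[OF assms(1)] by simp
qed

lemma mob_inj_unit: assumes "g \<in> su11" "cmod w1 \<le> 1" "cmod w2 \<le> 1" "mob g w1 = mob g w2" shows "w1 = w2"
  by (metis assms mob_inv)

lemma arc_image: assumes g: "g \<in> su11" and u: "cmod \<zeta> = 1" and th: "0 < \<theta>" "\<theta> < 2*pi"
  defines "a' \<equiv> mob g \<zeta>" and "\<theta>' \<equiv> angl (mob g (\<zeta> * cis \<theta>) / mob g \<zeta>)"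
  shows "mob g ` arcset \<zeta> \<theta> = arcset a' \<theta>'" "cmod a' = 1" "0 < \<theta>'" "\<theta>' < 2*pi"
    "a' * cis \<theta>' = mob g (\<zeta> * cis \<theta>)"
proof -
  have ub: "cmod (\<zeta> * cis \<theta>) = 1" using u by (simp add: norm_mult)
  show ua: "cmod a' = 1" unfolding a'_def using mob_unit g u by simp
  have ub': "cmod (mob g (\<zeta> * cis \<theta>)) = 1" using mob_unit g ub by simp
  have ne: "\<zeta> * cis \<theta> \<noteq> \<zeta>"
  proof
    assume "\<zeta> * cis \<theta> = \<zeta>" then have "cis \<theta> = cis 0" using u by auto
    then show False using cis_eq_in_range[of \<theta> 0] th by auto
  qed
  have ne': "mob g (\<zeta> * cis \<theta>) \<noteq> a'" unfolding a'_def using mob_inj_unit[OF g, of "\<zeta> * cis \<theta>" \<zeta>] ne u ub by auto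
  have uq: "cmod (mob g (\<zeta> * cis \<theta>) / a') = 1" using ua ub' by (simp add: norm_divide)
  have q1: "mob g (\<zeta> * cis \<theta>) / a' \<noteq> 1" using ne' ua by auto
  show t1: "0 < \<theta>'" "\<theta>' < 2*pi" unfolding \<theta>'_def a'_def[symmetric]
    using angl_pos[OF uq q1] angl(3)[OF uq] by auto
  have ct: "cis \<theta>' = mob g (\<zeta> * cis \<theta>) / a'" unfolding \<theta>'_def a'_def[symmetric]
    by (rule angl(1)[OF uq])
  have "a' \<noteq> 0" using ua by auto
  then show eb: "a' * cis \<theta>' = mob g (\<zeta> * cis \<theta>)" unfolding ct by simp
  show "mob g ` arcset \<zeta> \<theta> = arcset a' \<theta>'"
  proof (intro set_eqI iffI)
    fix y assume "y \<in> mob g ` arcset \<zeta> \<theta>"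
    then obtain w where w: "w \<in> arcset \<zeta> \<theta>" "y = mob g w" by auto
    have w': "cmod w = 1" "w = \<zeta> \<or> w = \<zeta> * cis \<theta> \<or> 0 < Im (Xf \<zeta> w (\<zeta> * cis \<theta>))"
      using w(1) arc_char[OF u th] by auto
    have "cmod y = 1" using w mob_unit g w' by simp
    moreover have "y = mob g \<zeta> \<or> y = mob g (\<zeta> * cis \<theta>) \<or> 0 < Im (Xf (mob g \<zeta>) y (mob g (\<zeta> * cis \<theta>)))"
      using w'(2) Im_Xf_mob[OF g u w'(1) ub] unfolding w(2) by auto
    then have "y = a' \<or> y = a' * cis \<theta>' \<or> 0 < Im (Xf a' y (a' * cis \<theta>'))"
      unfolding eb unfolding a'_def .
    ultimately show "y \<in> arcset a' \<theta>'" using arc_char[OF ua t1] by auto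
  next
    fix y assume "y \<in> arcset a' \<theta>'"
    then have y: "cmod y = 1" "y = a' \<or> y = a' * cis \<theta>' \<or> 0 < Im (Xf a' y (a' * cis \<theta>'))"
      using arc_char[OF ua t1] by auto
    define w where "w = mob (ginv g) y"
    have wy: "mob g w = y" unfolding w_def using mob_inv' g y by simp
    have uw: "cmod w = 1" unfolding w_def using mob_unit ginv_su11 g y by simp
    have y2: "mob g w = mob g \<zeta> \<or> mob g w = mob g (\<zeta> * cis \<theta>) \<or> 0 < Im (Xf (mob g \<zeta>) (mob g w) (mob g (\<zeta> * cis \<theta>)))"
      using y(2) unfolding eb unfolding a'_def wy .
    have "w = \<zeta> \<or> w = \<zeta> * cis \<theta> \<or> 0 < Im (Xf \<zeta> w (\<zeta> * cis \<theta>))"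
      using y2 Im_Xf_mob[OF g u uw ub] mob_inj_unit[OF g, of w] uw u ub by auto
    then have "w \<in> arcset \<zeta> \<theta>" using arc_char[OF u th] uw by auto
    then show "y \<in> mob g ` arcset \<zeta> \<theta>" using wy by auto
  qed
qed

lemma not_in_arc: assumes "cmod \<zeta> = 1" "0 < \<theta>" "\<theta> < \<tau>" "\<tau> < 2*pi"
  shows "\<zeta> * cis \<tau> \<notin> arcset \<zeta> \<theta>"
proof
  assume "\<zeta> * cis \<tau> \<in> arcset \<zeta> \<theta>"
  then obtain t where t: "0 \<le> t" "t \<le> \<theta>" "\<zeta> * cis \<tau> = \<zeta> * cis t" using arcset_alt assms by auto
  then have "cis \<tau> = cis t" using assms by auto
  then have "\<tau> = t" using cis_eq_in_range t assms by auto
  then show False using t assms by simp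
qed

lemma arc_unique: assumes u: "cmod \<zeta>1 = 1" "cmod \<zeta>2 = 1" and th: "0 < \<theta>1" "\<theta>1 < 2*pi" "0 < \<theta>2" "\<theta>2 < 2*pi"
  and eq: "arcset \<zeta>1 \<theta>1 = arcset \<zeta>2 \<theta>2"
  shows "\<zeta>1 = \<zeta>2 \<and> \<theta>1 = \<theta>2"
proof -
  have "\<zeta>2 \<in> arcset \<zeta>2 \<theta>2" using arcset_alt th by (auto intro!: exI[of _ 0])
  then have "\<zeta>2 \<in> arcset \<zeta>1 \<theta>1" using eq by simp
  then obtain t1 where t1: "0 \<le> t1" "t1 \<le> \<theta>1" "\<zeta>2 = \<zeta>1 * cis t1" unfolding arcset_alt[OF th(1)] by blast
  have "\<zeta>1 \<in> arcset \<zeta>1 \<theta>1" using arcset_alt th by (auto intro!: exI[of _ 0])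
  then have "\<zeta>1 \<in> arcset \<zeta>2 \<theta>2" using eq by simp
  then obtain t2 where t2: "0 \<le> t2" "t2 \<le> \<theta>2" "\<zeta>1 = \<zeta>2 * cis t2" unfolding arcset_alt[OF th(3)] by blast
  show ?thesis
  proof (cases "t1 = 0")
    case True
    then have z: "\<zeta>1 = \<zeta>2" using t1 by simp
    have "\<theta>1 = \<theta>2"
    proof (rule ccontr)
      assume "\<theta>1 \<noteq> \<theta>2"
      then consider "\<theta>1 < \<theta>2" | "\<theta>2 < \<theta>1" by linarith
      then show False
      proof cases
        case 1
        have "\<zeta>1 * cis \<theta>2 \<in> arcset \<zeta>2 \<theta>2" using arcset_alt th z by auto
        then show False using not_in_arc[OF u(1) th(1) 1 th(4)] eq by simp
      next
        case 2
        have "\<zeta>1 * cis \<theta>1 \<in> arcset \<zeta>1 \<theta>1" using arcset_alt th by auto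
        then show False using not_in_arc[OF u(2) th(3) 2 th(2)] eq z by simp
      qed
    qed
    then show ?thesis using z by simp
  next
    case False
    then have t1p: "0 < t1" using t1 by simp
    have "\<zeta>1 = \<zeta>1 * cis t1 * cis t2" using t1 t2 by simp
    then have "cis t1 * cis t2 = 1" using u(1) by (metis mult.assoc mult_cancel_left1 norm_zero zero_neq_one)
    moreover have "cis (pi*2) = 1" by (simp add: complex_eq_iff)
    ultimately have "cis t2 = cis (2*pi - t1)" by (simp add: cis_divide[symmetric] field_simps)
    then have "t2 = 2*pi - t1" using cis_eq_in_range[of t2 "2*pi - t1"] t1p t1 t2 th by auto
    define \<tau> where "\<tau> = (\<theta>1 + 2*pi)/2"
    have tau: "\<theta>1 < \<tau>" "\<tau> < 2*pi" using th by (auto simp: \<tau>_def)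
    have "\<zeta>1 * cis \<tau> = \<zeta>2 * cis (\<tau> - t1)" using t1 by (simp add: cis_divide[symmetric] cis_mult)
    moreover have "0 \<le> \<tau> - t1" "\<tau> - t1 \<le> \<theta>2" using tau t1 t2 \<open>t2 = 2*pi - t1\<close> by auto
    ultimately have "\<zeta>1 * cis \<tau> \<in> arcset \<zeta>2 \<theta>2" using arcset_alt th by auto
    then show ?thesis using not_in_arc[OF u(1) th(1) tau] eq by simp
  qed
qed

definition aa :: "complex \<times> real \<Rightarrow> complex" where
  "aa x = fst x / of_real (cmod (fst x))"
definition thx :: "complex \<times> real \<Rightarrow> real" where
  "thx x = 2 * arccos (snd x)"
definition bb :: "complex \<times> real \<Rightarrow> complex" where
  "bb x = aa x * cis (thx x)"

definition nonpole :: "complex \<times> real \<Rightarrow> bool" where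
  "nonpole x \<longleftrightarrow> x \<in> X1 \<and> x \<noteq> pole1 \<and> x \<noteq> pole2"

lemma X1_iff: "x \<in> X1 \<longleftrightarrow> (cmod (fst x))^2 + (snd x)^2 = 1"
  by (cases x) (simp add: X1_def)

lemma nonpole_facts: assumes "nonpole x"
  shows "fst x \<noteq> 0" "cmod (aa x) = 1" "-1 < snd x" "snd x < 1" "0 < thx x" "thx x < 2*pi"
proof -
  obtain w s where x: "x = (w,s)" by force
  have e: "(cmod w)^2 + s^2 = 1" using assms x by (simp add: nonpole_def X1_def)
  show w0: "fst x \<noteq> 0"
  proof
    assume "fst x = 0"
    then have "w = 0" using x by simp
    then have "s^2 = 1" using e by simp
    then have "s = 1 \<or> s = -1" by (simp add: power2_eq_1_iff)
    then show False using assms x \<open>w = 0\<close> by (auto simp: nonpole_def pole1_def pole2_def)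
  qed
  then show "cmod (aa x) = 1" by (simp add: aa_def norm_divide)
  have "0 < (cmod w)^2" using w0 x by simp
  then have "s^2 < 1" using e by linarith
  then have "\<bar>s\<bar> < 1" by (simp add: abs_square_less_1)
  then show s: "-1 < snd x" "snd x < 1" using x by auto
  have "0 < arccos (snd x)" "arccos (snd x) < pi" using arccos_lt_bounded[OF s] by auto
  then show "0 < thx x" "thx x < 2*pi" by (auto simp: thx_def)
qed

lemma arcpt_facts: assumes "cmod \<zeta> = 1" "0 < \<theta>" "\<theta> < 2*pi"
  shows "nonpole (arcpt \<zeta> \<theta>)" "aa (arcpt \<zeta> \<theta>) = \<zeta>" "thx (arcpt \<zeta> \<theta>) = \<theta>"
proof -
  have sp: "0 < sin (\<theta>/2)" using sin_half_pos assms by simp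
  have "(cmod (of_real (sin (\<theta>/2)) * \<zeta>))^2 + (cos (\<theta>/2))^2 = 1"
    using assms(1) by (simp add: norm_mult)
  then have X: "arcpt \<zeta> \<theta> \<in> X1" by (simp add: X1_iff arcpt_def)
  have "fst (arcpt \<zeta> \<theta>) \<noteq> 0" using sp assms by (auto simp: arcpt_def)
  then show "nonpole (arcpt \<zeta> \<theta>)" using X by (auto simp: nonpole_def pole1_def pole2_def)
  show "aa (arcpt \<zeta> \<theta>) = \<zeta>" using sp assms(1) by (simp add: aa_def arcpt_def norm_mult)
  have "arccos (cos (\<theta>/2)) = \<theta>/2" using assms by (intro arccos_cos) auto
  then show "thx (arcpt \<zeta> \<theta>) = \<theta>" by (simp add: thx_def arcpt_def)
qed

lemma arcpt_decode: assumes "nonpole x" shows "arcpt (aa x) (thx x) = x"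
proof -
  obtain w s where x: "x = (w,s)" by force
  have e: "(cmod w)^2 + s^2 = 1" using assms x by (simp add: nonpole_def X1_def)
  have s: "-1 < s" "s < 1" using nonpole_facts[OF assms] x by auto
  have "sin (arccos s) = sqrt (1 - s^2)" by (rule sin_arccos) (use s in auto)
  also have "\<dots> = cmod w" using e by (simp add: real_sqrt_unique)
  finally have sw: "sin (arccos s) = cmod w" .
  have "cos (arccos s) = s" using s by (intro cos_arccos) auto
  then show ?thesis using sw nonpole_facts(1)[OF assms] x by (simp add: arcpt_def aa_def thx_def)
qed

lemma arcact_eval: assumes g: "g \<in> su11" and x: "nonpole x"
  shows "arcact g x = arcpt (mob g (aa x)) (angl (mob g (bb x) / mob g (aa x)))"
proof -
  note f = nonpole_facts[OF x]
  define \<zeta> where "\<zeta> = aa x"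
  define \<theta> where "\<theta> = thx x"
  have u: "cmod \<zeta> = 1" and th: "0 < \<theta>" "\<theta> < 2*pi" using f by (auto simp: \<zeta>_def \<theta>_def)
  note AI = arc_image[OF g u th]
  define y0 where "y0 = arcpt (mob g \<zeta>) (angl (mob g (\<zeta> * cis \<theta>) / mob g \<zeta>))"
  have np: "\<not> (x = pole1 \<or> x = pole2)" using x by (auto simp: nonpole_def)
  have "arcact g x = (THE y. \<exists>\<zeta>' \<theta>'. cmod \<zeta>' = 1 \<and> 0 < \<theta>' \<and> \<theta>' < 2 * pi \<and>
            arcset \<zeta>' \<theta>' = mob g ` arcset \<zeta> \<theta> \<and> y = arcpt \<zeta>' \<theta>')"
    using np unfolding arcact_def Let_def \<zeta>_def \<theta>_def aa_def thx_def by simp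
  also have "\<dots> = y0"
  proof (rule the_equality)
    show "\<exists>\<zeta>' \<theta>'. cmod \<zeta>' = 1 \<and> 0 < \<theta>' \<and> \<theta>' < 2 * pi \<and>
            arcset \<zeta>' \<theta>' = mob g ` arcset \<zeta> \<theta> \<and> y0 = arcpt \<zeta>' \<theta>'"
      using AI unfolding y0_def by metis
  next
    fix y assume "\<exists>\<zeta>' \<theta>'. cmod \<zeta>' = 1 \<and> 0 < \<theta>' \<and> \<theta>' < 2 * pi \<and>
            arcset \<zeta>' \<theta>' = mob g ` arcset \<zeta> \<theta> \<and> y = arcpt \<zeta>' \<theta>'"
    then obtain \<zeta>' \<theta>' where y: "cmod \<zeta>' = 1" "0 < \<theta>'" "\<theta>' < 2 * pi"
      "arcset \<zeta>' \<theta>' = mob g ` arcset \<zeta> \<theta>" "y = arcpt \<zeta>' \<theta>'" by blast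
    have "\<zeta>' = mob g \<zeta> \<and> \<theta>' = angl (mob g (\<zeta> * cis \<theta>) / mob g \<zeta>)"
      by (rule arc_unique) (use y AI in auto)
    then show "y = y0" using y unfolding y0_def by simp
  qed
  finally show ?thesis unfolding y0_def \<zeta>_def \<theta>_def bb_def .
qed

lemma arcact_pole: "arcact g pole1 = pole1" "arcact g pole2 = pole2"
  by (simp_all add: arcact_def)

lemma bb_unit: "nonpole x \<Longrightarrow> cmod (bb x) = 1"
  using nonpole_facts by (simp add: bb_def norm_mult)

lemma arcact_nonpole: assumes g: "g \<in> su11" and x: "nonpole x"
  shows "nonpole (arcact g x)" "aa (arcact g x) = mob g (aa x)" "bb (arcact g x) = mob g (bb x)"
proof -
  note f = nonpole_facts[OF x]
  have "bb x = aa x * cis (thx x)" by (simp add: bb_def)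
  note AI = arc_image[OF g f(2) f(5) f(6), folded this]
  show "nonpole (arcact g x)" "aa (arcact g x) = mob g (aa x)"
    unfolding arcact_eval[OF g x] using arcpt_facts AI by auto
  have "bb (arcact g x) = aa (arcact g x) * cis (thx (arcact g x))" by (simp add: bb_def)
  then show "bb (arcact g x) = mob g (bb x)"
    unfolding arcact_eval[OF g x] using arcpt_facts AI by auto
qed

lemma angl_cis: "0 \<le> t \<Longrightarrow> t < 2*pi \<Longrightarrow> angl (cis t) = t"
  using angl[of "cis t"] cis_eq_in_range[of "angl (cis t)" t] by simp

lemma arcact_id: assumes "x \<in> X1" shows "arcact (1,0) x = x"
proof (cases "nonpole x")
  case True
  have "(1::complex,0::complex) \<in> su11" by (simp add: su11_def)
  moreover have "aa x \<noteq> 0" using nonpole_facts[OF True] by auto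
  then have "bb x / aa x = cis (thx x)" by (simp add: bb_def)
  ultimately show ?thesis using arcact_eval[of "(1,0)" x] True mob_id angl_cis nonpole_facts[OF True]
    arcpt_decode[OF True] by simp
next
  case False then show ?thesis using assms arcact_pole by (auto simp: nonpole_def)
qed

lemma arcact_X1: assumes "g \<in> su11" "x \<in> X1" shows "arcact g x \<in> X1"
proof (cases "nonpole x")
  case True then show ?thesis using arcact_nonpole(1)[OF assms(1)] by (auto simp: nonpole_def)
next
  case False
  then have "x = pole1 \<or> x = pole2" using assms by (auto simp: nonpole_def)
  then show ?thesis using arcact_pole[of g] assms by auto
qed

lemma arcact_comp: assumes A: "A \<in> su11" and B: "B \<in> su11" and x: "x \<in> X1"
  shows "arcact A (arcact B x) = arcact (gmul A B) x"
proof (cases "nonpole x")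
  case True
  note f = nonpole_facts[OF True]
  have AB: "gmul A B \<in> su11" using gmul_su11 A B by simp
  have y: "nonpole (arcact B x)" using arcact_nonpole[OF B True] by simp
  have DA: "Dn B (aa x) \<noteq> 0" "Dn B (bb x) \<noteq> 0" using Dn_nonzero B f bb_unit[OF True] by auto
  show ?thesis unfolding arcact_eval[OF A y] arcact_eval[OF AB True] arcact_nonpole[OF B True]
    mob_gmul[OF A B DA(1)] mob_gmul[OF A B DA(2)] ..
next
  case False
  then have "x = pole1 \<or> x = pole2" using x by (auto simp: nonpole_def)
  then show ?thesis using arcact_pole[of A] arcact_pole[of B] arcact_pole[of "gmul A B"] by auto
qed

definition grp :: "(complex \<times> complex) set \<Rightarrow> bool" where
  "grp G \<longleftrightarrow> G \<subseteq> su11 \<and> (1,0) \<in> G \<and> (\<forall>g\<in>G. \<forall>h\<in>G. gmul g h \<in> G) \<and> (\<forall>g\<in>G. ginv g \<in> G)"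

lemma csg_grp: "cocompact_surface_group G \<Longrightarrow> grp G"
  by (simp add: cocompact_surface_group_def grp_def)

lemma Ytot_iff: "p \<in> Ytot \<longleftrightarrow> cmod (fst p) < 1 \<and> snd p \<in> X1"
  by (cases p) (auto simp: Ytot_def disc_def)

lemma gact_Ytot: assumes "g \<in> su11" "p \<in> Ytot" shows "gact g p \<in> Ytot"
  using assms mob_disc[OF ginv_su11[OF assms(1)]] arcact_X1[OF ginv_su11[OF assms(1)]]
  by (simp add: Ytot_iff gact_def)

lemma gact_comp: assumes g: "g \<in> su11" and h: "h \<in> su11" and p: "p \<in> Ytot"
  shows "gact h (gact g p) = gact (gmul g h) p"
proof -
  have gi: "ginv g \<in> su11" "ginv h \<in> su11" using g h ginv_su11 by auto
  have d: "Dn (ginv g) (fst p) \<noteq> 0" using Dn_nonzero gi p by (auto simp: Ytot_iff)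
  have "mob (ginv h) (mob (ginv g) (fst p)) = mob (ginv (gmul g h)) (fst p)"
    unfolding ginv_gmul_distrib using mob_gmul[OF gi(2) gi(1) d] by simp
  moreover have "arcact (ginv h) (arcact (ginv g) (snd p)) = arcact (ginv (gmul g h)) (snd p)"
    unfolding ginv_gmul_distrib using arcact_comp[OF gi(2) gi(1)] p by (simp add: Ytot_iff)
  ultimately show ?thesis by (simp add: gact_def)
qed

lemma gact_id: "p \<in> Ytot \<Longrightarrow> gact (1,0) p = p"
  using arcact_id[of "snd p"] mob_id by (simp add: gact_def ginv_def Ytot_iff)

lemma gact_inv: assumes "g \<in> su11" "p \<in> Ytot" shows "gact (ginv g) (gact g p) = p"
  using gact_comp[OF assms(1) ginv_su11[OF assms(1)] assms(2)] gmul_ginv[OF assms(1)] gact_id[OF assms(2)]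
  by simp

lemma Mproj_self: assumes "grp G" "p \<in> Ytot" shows "p \<in> Mproj G p"
proof -
  have "(1,0) \<in> G" using assms(1) by (simp add: grp_def)
  moreover have "p = gact (1,0) p" using gact_id[OF assms(2)] by simp
  ultimately show ?thesis unfolding Mproj_def by blast
qed

lemma Mproj_sub: assumes "grp G" "p \<in> Ytot" shows "Mproj G p \<subseteq> Ytot"
proof
  fix q assume "q \<in> Mproj G p"
  then obtain g where "g \<in> G" "q = gact g p" unfolding Mproj_def by blast
  then show "q \<in> Ytot" using gact_Ytot[of g p] assms by (auto simp: grp_def)
qed

lemma Mproj_eq: assumes G: "grp G" and p: "p \<in> Ytot" and q: "q \<in> Mproj G p"
  shows "Mproj G q = Mproj G p"
proof -
  obtain g where g: "g \<in> G" "q = gact g p" using q by (auto simp: Mproj_def)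
  have gs: "g \<in> su11" using g G by (auto simp: grp_def)
  show ?thesis
  proof (intro set_eqI iffI)
    fix r assume "r \<in> Mproj G q"
    then obtain h where h: "h \<in> G" "r = gact h q" by (auto simp: Mproj_def)
    have "r = gact (gmul g h) p" using gact_comp[OF gs _ p, of h] h G g by (auto simp: grp_def)
    then show "r \<in> Mproj G p" using G g h by (auto simp: Mproj_def grp_def)
  next
    fix r assume "r \<in> Mproj G p"
    then obtain h where h: "h \<in> G" "r = gact h p" by (auto simp: Mproj_def)
    have p': "p = gact (ginv g) q" using gact_inv[OF gs p] g by simp
    have qY: "q \<in> Ytot" using gact_Ytot[OF gs p] g by simp
    have "r = gact (gmul (ginv g) h) q" using gact_comp[OF ginv_su11[OF gs] _ qY, of h] h G p' by (auto simp: grp_def)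
    then show "r \<in> Mproj G q" using G g h by (auto simp: Mproj_def grp_def)
  qed
qed

lemma Mspace_disj: assumes G: "grp G" and c: "c \<in> Mspace G" "d \<in> Mspace G" and q: "q \<in> c" "q \<in> d"
  shows "c = d"
proof -
  obtain p1 where p1: "p1 \<in> Ytot" "c = Mproj G p1" using c by (auto simp: Mspace_def)
  obtain p2 where p2: "p2 \<in> Ytot" "d = Mproj G p2" using c by (auto simp: Mspace_def)
  show ?thesis using Mproj_eq[OF G p1(1), of q] Mproj_eq[OF G p2(1), of q] p1 p2 q by simp
qed

lemma Union_Mspace: assumes "grp G" shows "\<Union> (Mspace G) = Ytot"
proof
  show "\<Union> (Mspace G) \<subseteq> Ytot" unfolding Mspace_def using Mproj_sub[OF assms] by auto
  show "Ytot \<subseteq> \<Union> (Mspace G)"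
  proof
    fix p assume "p \<in> Ytot"
    then have "p \<in> Mproj G p" "Mproj G p \<in> Mspace G" using Mproj_self[OF assms] by (auto simp: Mspace_def)
    then show "p \<in> \<Union> (Mspace G)" by blast
  qed
qed

lemma Mtop_istop: assumes G: "grp G"
  shows "istopology (\<lambda>U. U \<subseteq> Mspace G \<and> openin (top_of_set Ytot) (\<Union>U))"
proof -
  have 1: "S \<inter> T \<subseteq> Mspace G \<and> openin (top_of_set Ytot) (\<Union> (S \<inter> T))"
    if S: "S \<subseteq> Mspace G" "openin (top_of_set Ytot) (\<Union> S)" and T: "T \<subseteq> Mspace G" "openin (top_of_set Ytot) (\<Union> T)" for S T
  proof -
    have "\<Union>(S \<inter> T) = \<Union>S \<inter> \<Union>T"
    proof
      show "\<Union> S \<inter> \<Union> T \<subseteq> \<Union> (S \<inter> T)"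
      proof
        fix q assume "q \<in> \<Union> S \<inter> \<Union> T"
        then obtain c d where "c \<in> S" "d \<in> T" "q \<in> c" "q \<in> d" by auto
        then show "q \<in> \<Union> (S \<inter> T)" using Mspace_disj[OF G, of c d q] S T by auto
      qed
    qed auto
    then show ?thesis using S T by auto
  qed
  have 2: "\<Union> K \<subseteq> Mspace G \<and> openin (top_of_set Ytot) (\<Union> (\<Union> K))"
    if K: "\<forall>U\<in>K. U \<subseteq> Mspace G \<and> openin (top_of_set Ytot) (\<Union> U)" for K
  proof -
    have "\<Union>(\<Union>K) = \<Union>(Union ` K)" by auto
    then show ?thesis using K by auto
  qed
  show ?thesis unfolding istopology_def using 1 2 by auto
qed

lemma openin_Mtop: assumes "grp G" shows "openin (Mtop G) U \<longleftrightarrow> U \<subseteq> Mspace G \<and> openin (top_of_set Ytot) (\<Union>U)"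
  unfolding Mtop_def topology_inverse'[OF Mtop_istop[OF assms]] ..

lemma topspace_Mtop: assumes "grp G" shows "topspace (Mtop G) = Mspace G"
proof -
  have "openin (Mtop G) (Mspace G)" using openin_Mtop[OF assms] Union_Mspace[OF assms] by simp
  then have "Mspace G \<subseteq> topspace (Mtop G)" by (rule openin_subset)
  moreover have "topspace (Mtop G) \<subseteq> Mspace G" using openin_Mtop[OF assms, of "topspace (Mtop G)"] openin_topspace[of "Mtop G"] by simp
  ultimately show ?thesis by blast
qed

definition qlift :: "(complex \<times> (complex \<times> real) \<Rightarrow> 'b) \<Rightarrow> (complex \<times> (complex \<times> real)) set \<Rightarrow> 'b" where
  "qlift f c = f (SOME p. p \<in> c \<inter> Ytot)"

definition invariant :: "(complex \<times> complex) set \<Rightarrow> (complex \<times> (complex \<times> real) \<Rightarrow> 'b) \<Rightarrow> bool" where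
  "invariant G f \<longleftrightarrow> (\<forall>g\<in>G. \<forall>p\<in>Ytot. f (gact g p) = f p)"

lemma qlift_Mproj: assumes G: "grp G" and f: "invariant G f" and p: "p \<in> Ytot"
  shows "qlift f (Mproj G p) = f p"
proof -
  have "\<exists>q. q \<in> Mproj G p \<inter> Ytot" using Mproj_self[OF G p] p by blast
  then have q: "(SOME q. q \<in> Mproj G p \<inter> Ytot) \<in> Mproj G p" by (metis (mono_tags, lifting) IntE someI)
  then obtain g where "g \<in> G" "(SOME q. q \<in> Mproj G p \<inter> Ytot) = gact g p" by (auto simp: Mproj_def)
  then show ?thesis using f p unfolding qlift_def invariant_def by simp
qed

lemma qlift_preimage: assumes G: "grp G" and f: "invariant G f"
  shows "\<Union>{c \<in> Mspace G. qlift f c \<in> U} = Ytot \<inter> f -` U"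
proof
  show "\<Union>{c \<in> Mspace G. qlift f c \<in> U} \<subseteq> Ytot \<inter> f -` U"
  proof
    fix q assume "q \<in> \<Union>{c \<in> Mspace G. qlift f c \<in> U}"
    then obtain p where p: "p \<in> Ytot" "q \<in> Mproj G p" "qlift f (Mproj G p) \<in> U" by (auto simp: Mspace_def)
    have qY: "q \<in> Ytot" using Mproj_sub[OF G p(1)] p by auto
    have "f q = f p" using qlift_Mproj[OF G f p(1)] qlift_Mproj[OF G f qY] Mproj_eq[OF G p(1) p(2)] by simp
    then show "q \<in> Ytot \<inter> f -` U" using qY p qlift_Mproj[OF G f p(1)] by simp
  qed
next
  show "Ytot \<inter> f -` U \<subseteq> \<Union>{c \<in> Mspace G. qlift f c \<in> U}"
  proof
    fix q assume q: "q \<in> Ytot \<inter> f -` U"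
    then have "Mproj G q \<in> {c \<in> Mspace G. qlift f c \<in> U}" using qlift_Mproj[OF G f] by (auto simp: Mspace_def)
    then show "q \<in> \<Union>{c \<in> Mspace G. qlift f c \<in> U}" using Mproj_self[OF G] q by blast
  qed
qed

lemma qlift_open: assumes G: "grp G" and f: "invariant G f" and c: "continuous_on Ytot f" and U: "open U"
  shows "openin (Mtop G) {c \<in> Mspace G. qlift f c \<in> U}"
  unfolding openin_Mtop[OF G] qlift_preimage[OF G f]
  using continuous_openin_preimage_gen[OF c U] by auto

lemma qlift_cont: assumes G: "grp G" and f: "invariant G f" and c: "continuous_on Ytot f"
  shows "continuous_map (Mtop G) euclideanreal (qlift f)"
  unfolding continuous_map_def topspace_Mtop[OF G] using qlift_open[OF G f c] by auto

lemma arctan_alg: fixes r i :: real assumes "r \<noteq> 0"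
  shows "1 + 2 * (inverse (1 + (i/r)^2) * (((1-r)*r - i*i)/(r*r))) = (2*r - r^2 - i^2)/(r^2+i^2)"
proof -
  have d: "r^2 + i^2 \<noteq> 0" using assms by (simp add: add_nonneg_eq_0_iff)
  have "1 + (i/r)^2 = (r^2 + i^2)/r^2" using assms by (simp add: field_simps)
  then have inv: "inverse (1 + (i/r)^2) = r^2/(r^2+i^2)" by simp
  have c: "r^2/(r^2+i^2) * (((1-r)*r - i*i)/(r*r)) = ((1-r)*r - i*i)/(r^2+i^2)"
    using assms by (simp add: power2_eq_square)
  have "1 + 2 * (((1-r)*r - i*i)/(r^2+i^2)) = (r^2+i^2 + 2 * ((1-r)*r - i*i))/(r^2+i^2)"
    using d by (simp add: add_divide_distrib)
  also have "\<dots> = (2*r - r^2 - i^2)/(r^2+i^2)" by (simp add: algebra_simps power2_eq_square)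
  finally show ?thesis unfolding inv c .
qed

locale rw =
  fixes x0 y0 :: real
  assumes small: "x0^2 + y0^2 < 1"
begin

definition R :: "real \<Rightarrow> real" where "R t = 1 - x0 * cos t - y0 * sin t"
definition I :: "real \<Rightarrow> real" where "I t = x0 * sin t - y0 * cos t"
definition Gf :: "real \<Rightarrow> real" where "Gf t = t + 2 * arctan (I t / R t)"

lemma AI: "(x0 * cos t + y0 * sin t)^2 + (I t)^2 = x0^2 + y0^2"
proof -
  have "(x0 * cos t + y0 * sin t)^2 + (I t)^2 = (x0^2 + y0^2) * ((sin t)^2 + (cos t)^2)"
    unfolding I_def power2_eq_square by algebra
  then show ?thesis by simp
qed

lemma Rpos: "0 < R t"
proof (rule ccontr)
  assume "\<not> 0 < R t"
  then have "1 \<le> x0 * cos t + y0 * sin t" unfolding R_def by simp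
  then have "1 \<le> (x0 * cos t + y0 * sin t)^2" by (simp add: one_le_power)
  then show False using AI[of t] small by (smt (verit) zero_le_power2)
qed

lemma Gf_deriv: "\<exists>y. (Gf has_real_derivative y) (at t) \<and> 0 < y"
proof -
  have Rn: "R t \<noteq> 0" using Rpos[of t] by simp
  have dR: "(R has_real_derivative I t) (at t)" unfolding R_def I_def
    by (auto intro!: derivative_eq_intros)
  have dI: "(I has_real_derivative (1 - R t)) (at t)" unfolding R_def I_def
    by (auto intro!: derivative_eq_intros)
  have dq: "((\<lambda>t. I t / R t) has_real_derivative ((1 - R t) * R t - I t * I t) / (R t * R t)) (at t)"
    using DERIV_divide[OF dI dR Rn] .
  have dG: "(Gf has_real_derivative 1 + 2 * (inverse (1 + (I t / R t)^2) * (((1 - R t) * R t - I t * I t) / (R t * R t)))) (at t)"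
  proof -
    have da: "((\<lambda>t. arctan (I t / R t)) has_real_derivative inverse (1 + (I t / R t)^2) * (((1 - R t) * R t - I t * I t) / (R t * R t))) (at t)"
      by (rule DERIV_chain2[OF DERIV_arctan dq])
    have "((\<lambda>t. t + 2 * arctan (I t / R t)) has_real_derivative 1 + 2 * (inverse (1 + (I t / R t)^2) * (((1 - R t) * R t - I t * I t) / (R t * R t)))) (at t)"
      by (intro DERIV_add DERIV_cmult da DERIV_ident)
    then show ?thesis unfolding Gf_def .
  qed
  have e: "1 + 2 * (inverse (1 + (I t / R t)^2) * (((1 - R t) * R t - I t * I t) / (R t * R t)))
      = (2 * R t - (R t)^2 - (I t)^2) / ((R t)^2 + (I t)^2)"
    using arctan_alg[OF Rn] .
  have num: "2 * R t - (R t)^2 - (I t)^2 = 1 - x0^2 - y0^2"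
    using AI[of t] unfolding R_def by (simp add: algebra_simps power2_eq_square)
  have "0 < (R t)^2 + (I t)^2" using Rn by (simp add: add_pos_nonneg)
  then have "0 < (2 * R t - (R t)^2 - (I t)^2) / ((R t)^2 + (I t)^2)" using num small by simp
  then show ?thesis using dG e by auto
qed

lemma Gf_mono: "a < b \<Longrightarrow> Gf a < Gf b"
  by (rule DERIV_pos_imp_increasing) (use Gf_deriv in auto)

lemma Gf_period: "Gf (t + 2*pi) = Gf t + 2*pi"
  by (simp add: Gf_def R_def I_def)

end

definition Ugen :: "complex \<Rightarrow> complex \<Rightarrow> real \<Rightarrow> real" where
  "Ugen z a \<theta> = \<theta>/(2*pi) + (Arg (1 - z/(a * cis \<theta>)) - Arg (1 - z/a))/pi"

lemma Ugen_bounds: assumes z: "cmod z < 1" and a: "cmod a = 1" and th: "0 < \<theta>" "\<theta> < 2*pi"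
  shows "0 < Ugen z a \<theta>" "Ugen z a \<theta> < 1"
proof -
  define w0 where "w0 = z / a"
  define x0 where "x0 = Re w0"
  define y0 where "y0 = Im w0"
  have "cmod w0 < 1" using z a by (simp add: w0_def norm_divide)
  then have "(cmod w0)^2 < 1" by (simp add: abs_square_less_1)
  then have sm: "x0^2 + y0^2 < 1" by (simp add: x0_def y0_def cmod_power2)
  interpret rw x0 y0 using sm by unfold_locales
  have a0: "a \<noteq> 0" using a by auto
  have e1: "1 - z/(a * cis t) = Complex (R t) (I t)" for t
  proof -
    have "cis t * cis (- t) = 1" by (simp add: cis_mult)
    then have "z/(a * cis t) = w0 * cis (-t)" using a0 by (simp add: w0_def field_simps)
    then have "1 - z/(a * cis t) = 1 - w0 * cis (-t)" by simp
    also have "\<dots> = Complex (R t) (I t)" unfolding R_def I_def by (simp add: complex_eq_iff x0_def y0_def algebra_simps)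
    finally show ?thesis .
  qed
  have e0: "1 - z/a = Complex (R 0) (I 0)" using e1[of 0] by simp
  have A: "Arg (Complex (R t) (I t)) = arctan (I t / R t)" for t using arg_conv_arctan[of "Complex (R t) (I t)"] Rpos by simp
  have "2*pi * Ugen z a \<theta> = Gf \<theta> - Gf 0"
    unfolding Ugen_def e1 e0 A Gf_def by (simp add: field_simps)
  moreover have "Gf 0 < Gf \<theta>" "Gf \<theta> < Gf (0 + 2*pi)" using Gf_mono th by auto
  ultimately have "0 < 2*pi * Ugen z a \<theta>" "2*pi * Ugen z a \<theta> < 2*pi * 1" using Gf_period[of 0] by auto
  then show "0 < Ugen z a \<theta>" "Ugen z a \<theta> < 1" by (simp_all add: zero_less_mult_iff)
qed


definition Ef :: "complex \<Rightarrow> complex \<Rightarrow> complex \<Rightarrow> complex" where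
  "Ef z a b = (b - z) * (1 - cnj z * a) / ((1 - cnj z * b) * (a - z))"

lemma cis_Arg_sq: "p \<noteq> 0 \<Longrightarrow> (cis (Arg p))^2 = p / cnj p"
proof -
  assume p: "p \<noteq> 0"
  have "cis (Arg p) = p / of_real (cmod p)" using cis_Arg[OF p] by (simp add: sgn_div_norm scaleR_conv_of_real divide_inverse mult.commute)
  then have "(cis (Arg p))^2 = p^2 / (complex_of_real (cmod p))^2" by (simp add: power_divide)
  also have "(complex_of_real (cmod p))^2 = p * cnj p" using complex_norm_square[of p] by simp
  finally have "(cis (Arg p))^2 = p^2 / (p * cnj p)" .
  then show ?thesis using p by (simp add: power2_eq_square)
qed

lemma unit_inv_cnj: assumes "cmod a = 1" shows "1 / a = cnj a"
proof -
  have "a * cnj a = 1" using complex_norm_square[of a] assms by simp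
  moreover have "a \<noteq> 0" using assms by auto
  ultimately show ?thesis by (simp add: field_simps)
qed

lemma cis_double: "cis (2 * y) = (cis y)^2"
proof -
  have "cis (2 * y) = cis (y + y)" by (simp only: mult_2)
  also have "\<dots> = cis y * cis y" by (simp only: cis_mult)
  finally show ?thesis by (simp only: power2_eq_square)
qed

lemma Ef_alg: fixes a b z Pa Pb :: complex
  assumes "a \<noteq> 0" "b \<noteq> 0" "Pa \<noteq> 0" "Pb \<noteq> 0" "a - z \<noteq> 0" "b - z \<noteq> 0"
  shows "(b/a) * (((b-z)/b) / Pb) / (((a-z)/a) / Pa) = (b-z)*Pa/(Pb*(a-z))"
  using assms by (simp add: field_simps)

lemma Ugen_cis: assumes z: "cmod z < 1" and a: "cmod a = 1"
  shows "cis (2*pi * Ugen z a \<theta>) = Ef z a (a * cis \<theta>)"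
proof -
  define b where "b = a * cis \<theta>"
  have b: "cmod b = 1" using a by (simp add: b_def norm_mult)
  have a0: "a \<noteq> 0" "b \<noteq> 0" using a b by auto
  have za: "a - z \<noteq> 0" "b - z \<noteq> 0"
  proof -
    show "a - z \<noteq> 0" proof assume "a - z = 0" then have "a = z" by simp then show False using z a by simp qed
    show "b - z \<noteq> 0" proof assume "b - z = 0" then have "b = z" by simp then show False using z b by simp qed
  qed
  have p1: "1 - z/b \<noteq> 0" "1 - z/a \<noteq> 0"
  proof -
    have "1 - z/b = (b - z)/b" "1 - z/a = (a - z)/a" using a0 by (simp_all add: diff_divide_distrib)
    then show "1 - z/b \<noteq> 0" "1 - z/a \<noteq> 0" using za a0 by simp_all
  qed
  have cb: "cnj (1 - z/b) = 1 - cnj z * b" "cnj (1 - z/a) = 1 - cnj z * a"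
    using unit_inv_cnj[OF b] unit_inv_cnj[OF a] by (simp_all add: divide_inverse)
  have cb0: "1 - cnj z * b \<noteq> 0" "1 - cnj z * a \<noteq> 0" using p1 unfolding cb[symmetric] by simp_all
  have U2: "2*pi * Ugen z a \<theta> = \<theta> + 2 * Arg (1 - z/b) - 2 * Arg (1 - z/a)"
    unfolding Ugen_def b_def by (simp add: field_simps)
  have "cis (\<theta> + 2 * Arg (1 - z/b) - 2 * Arg (1 - z/a)) = cis \<theta> * cis (2 * Arg (1 - z/b)) / cis (2 * Arg (1 - z/a))"
    by (simp only: cis_mult cis_divide)
  then have "cis (2*pi * Ugen z a \<theta>) = cis \<theta> * (cis (Arg (1 - z/b)))^2 / (cis (Arg (1 - z/a)))^2"
    unfolding U2 cis_double .
  also have "\<dots> = (b/a) * ((1 - z/b) / (1 - cnj z * b)) / ((1 - z/a) / (1 - cnj z * a))"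
    unfolding cis_Arg_sq[OF p1(1)] cis_Arg_sq[OF p1(2)] cb using a0 by (simp add: b_def)
  also have "\<dots> = Ef z a b"
  proof -
    have "1 - z/b = (b-z)/b" "1 - z/a = (a - z)/a" using a0 by (simp_all add: diff_divide_distrib)
    then show ?thesis unfolding Ef_def using Ef_alg[OF a0 cb0(2) cb0(1) za] by simp
  qed
  finally show ?thesis unfolding b_def .
qed

lemma one_minus_cnj_mob: assumes g: "g \<in> su11" "Dn g z \<noteq> 0" "Dn g w \<noteq> 0"
  shows "1 - cnj (mob g z) * mob g w = (1 - cnj z * w) / (cnj (Dn g z) * Dn g w)"
proof -
  obtain \<alpha> \<beta> where gg: "g = (\<alpha>,\<beta>)" by force
  have r: "\<alpha> * cnj \<alpha> - \<beta> * cnj \<beta> = 1" using su11_rel[OF g(1)] gg by simp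
  have e: "cnj (cnj \<beta> * z + cnj \<alpha>) * (cnj \<beta> * w + cnj \<alpha>) - cnj (\<alpha> * z + \<beta>) * (\<alpha> * w + \<beta>)
      = (\<alpha> * cnj \<alpha> - \<beta> * cnj \<beta>) * (1 - cnj z * w)"
    by (simp add: algebra_simps)
  have "1 - cnj (mob g z) * mob g w = (cnj (Dn g z) * Dn g w - cnj (fst g * z + snd g) * (fst g * w + snd g)) / (cnj (Dn g z) * Dn g w)"
    unfolding mob_Dn using g by (simp add: field_simps)
  also have "\<dots> = (1 - cnj z * w) / (cnj (Dn g z) * Dn g w)" using e r unfolding gg Dn_def by simp
  finally show ?thesis .
qed

lemma Ef_alg2: fixes A B Z cZ X Y Pa Pb :: complex
  assumes "A \<noteq> 0" "B \<noteq> 0" "Z \<noteq> 0" "cZ \<noteq> 0" "Pb \<noteq> 0" "Y \<noteq> 0"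
  shows "(X/(B*Z)) * (Pa/(cZ*A)) / ((Pb/(cZ*B)) * (Y/(A*Z))) = X * Pa / (Pb * Y)"
  using assms by (simp add: field_simps)

lemma Ef_mob: assumes g: "g \<in> su11" and z: "cmod z < 1" and a: "cmod a = 1" and b: "cmod b = 1"
  shows "Ef (mob g z) (mob g a) (mob g b) = Ef z a b"
proof -
  have D: "Dn g z \<noteq> 0" "Dn g a \<noteq> 0" "Dn g b \<noteq> 0" using Dn_nonzero g z a b by auto
  have cD: "cnj (Dn g z) \<noteq> 0" using D by simp
  have za: "a - z \<noteq> 0" proof assume "a - z = 0" then have "a = z" by simp then show False using z a by simp qed
  have pb: "1 - cnj z * b \<noteq> 0"
  proof
    assume "1 - cnj z * b = 0"
    then have "1 = cmod (cnj z * b)" by (metis eq_iff_diff_eq_0 norm_one)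
    then show False using z b by (simp add: norm_mult)
  qed
  show ?thesis unfolding Ef_def mob_diff[OF g D(3) D(1)] mob_diff[OF g D(2) D(1)]
    one_minus_cnj_mob[OF g D(1) D(2)] one_minus_cnj_mob[OF g D(1) D(3)]
    by (rule Ef_alg2[OF D(2) D(3) D(1) cD pb za])
qed

definition uu :: "complex \<times> (complex \<times> real) \<Rightarrow> real" where
  "uu p = thx (snd p)/(2*pi) + (Arg (1 - fst p / bb (snd p)) - Arg (1 - fst p / aa (snd p)))/pi"

lemma uu_nonpole: "nonpole x \<Longrightarrow> uu (z,x) = Ugen z (aa x) (thx x)"
  by (simp add: uu_def Ugen_def bb_def)

lemma aa_pole: "x = pole1 \<or> x = pole2 \<Longrightarrow> aa x = 0 \<and> bb x = 0"
  by (auto simp: aa_def bb_def pole1_def pole2_def)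

lemma uu_pole: "x = pole1 \<or> x = pole2 \<Longrightarrow> uu (z,x) = thx x/(2*pi)"
  using aa_pole[of x] by (simp add: uu_def)

lemma uu_inv_su11: assumes g: "g \<in> su11" and p: "p \<in> Ytot"
  shows "uu (mob g (fst p), arcact g (snd p)) = uu p"
proof -
  obtain z x where pz: "p = (z,x)" by (cases p) blast
  have z: "cmod z < 1" and x: "x \<in> X1" using p pz by (auto simp: Ytot_iff)
  show ?thesis
  proof (cases "nonpole x")
    case False
    then have xp: "x = pole1 \<or> x = pole2" using x by (auto simp: nonpole_def)
    then have "arcact g x = x" using arcact_pole[of g] by auto
    then show ?thesis using uu_pole[OF xp] pz by simp
  next
    case True
    note f = nonpole_facts[OF True]
    note n = arcact_nonpole[OF g True]
    note f' = nonpole_facts[OF n(1)]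
    have gz: "cmod (mob g z) < 1" using mob_disc[OF g z] .
    define U where "U = Ugen z (aa x) (thx x)"
    define U' where "U' = Ugen (mob g z) (aa (arcact g x)) (thx (arcact g x))"
    have b1: "0 < U" "U < 1" unfolding U_def using Ugen_bounds[OF z f(2) f(5) f(6)] by auto
    have b2: "0 < U'" "U' < 1" unfolding U'_def using Ugen_bounds[OF gz f'(2) f'(5) f'(6)] by auto
    have "cis (2*pi*U') = Ef (mob g z) (aa (arcact g x)) (bb (arcact g x))"
      unfolding U'_def Ugen_cis[OF gz f'(2)] bb_def ..
    also have "\<dots> = Ef (mob g z) (mob g (aa x)) (mob g (bb x))" using n by simp
    also have "\<dots> = Ef z (aa x) (bb x)" using Ef_mob[OF g z f(2) bb_unit[OF True]] .
    also have "\<dots> = cis (2*pi*U)" unfolding U_def Ugen_cis[OF z f(2)] bb_def ..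
    finally have "2*pi*U' = 2*pi*U" using b1 b2 by (intro cis_eq_in_range) auto
    then have "U' = U" by simp
    then show ?thesis unfolding U_def U'_def using uu_nonpole[OF True] uu_nonpole[OF n(1)] pz by simp
  qed
qed

lemma uu_gact: assumes g: "g \<in> su11" and p: "p \<in> Ytot" shows "uu (gact g p) = uu p"
  using uu_inv_su11[OF ginv_su11[OF g] p] by (simp add: gact_def)

lemma uu_invariant: "grp G \<Longrightarrow> invariant G uu"
  unfolding invariant_def grp_def using uu_gact by blast

fun Ph :: "nat \<Rightarrow> complex \<times> (complex \<times> real) \<Rightarrow> complex" where
  "Ph 0 p = of_real (thx (snd p)/(2*pi)) + (Ln (1 - fst p / bb (snd p)) - Ln (1 - fst p / aa (snd p))) / (\<i> * of_real pi)"
| "Ph (Suc n) p = - of_real (fact n) / (\<i> * of_real pi) * (1/(bb (snd p) - fst p)^(Suc n) - 1/(aa (snd p) - fst p)^(Suc n))"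

lemma unit_sub_ne: "cmod a = 1 \<Longrightarrow> cmod z < 1 \<Longrightarrow> a - z \<noteq> 0"
proof
  assume "cmod a = 1" "cmod z < 1" "a - z = 0"
  then show False by simp
qed

lemma one_minus_div_re: assumes "cmod a = 1" "cmod z < 1" shows "0 < Re (1 - z/a)"
proof -
  have "cmod (z/a) < 1" using assms by (simp add: norm_divide)
  then have "Re (z/a) < 1" using complex_Re_le_cmod[of "z/a"] by linarith
  then show ?thesis by simp
qed

lemma Re_pos_not_nonpos: "0 < Re y \<Longrightarrow> y \<notin> \<real>\<^sub>\<le>\<^sub>0"
  by (auto simp: nonpos_Reals_def)

lemma Ph_pole_const: assumes "x = pole1 \<or> x = pole2"
  shows "Ph 0 (w,x) = of_real (thx x/(2*pi))" "Ph (Suc n) (w,x) = 0"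
  using aa_pole[OF assms] by simp_all

lemma inv_pow_deriv: fixes c z :: complex assumes "c - z \<noteq> 0"
  shows "((\<lambda>w. 1/(c - w)^(Suc j)) has_field_derivative of_nat (Suc j) / (c - z)^(Suc (Suc j))) (at z)"
proof -
  define y where "y = c - z"
  have y: "y \<noteq> 0" using assms by (simp add: y_def)
  have d0: "((\<lambda>w. (c - w)^(Suc j)) has_field_derivative of_nat (Suc j) * (c - z)^j * (-1)) (at z)"
  proof -
    have g: "((\<lambda>w. c - w) has_field_derivative -1) (at z)" by (auto intro!: derivative_eq_intros)
    show ?thesis using DERIV_power[OF g, of "Suc j"] by (simp add: algebra_simps)
  qed
  have f0: "(c - z)^(Suc j) \<noteq> 0" using assms by simp
  have d1: "((\<lambda>w. inverse ((c - w)^(Suc j))) has_field_derivative - (of_nat (Suc j) * (c - z)^j * (-1) * inverse (((c - z)^(Suc j))^2))) (at z)"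
    using DERIV_inverse_fun[OF d0 f0] by (simp only: power2_eq_square power_Suc power_0 mult_1_right)
  have p: "((c - z)^(Suc j))^2 = (c - z)^j * (c - z)^(Suc (Suc j))"
    by (simp add: power2_eq_square power_add[symmetric])
  have "- (of_nat (Suc j) * y^j * (-1) * inverse (y^j * y^(Suc (Suc j)))) = of_nat (Suc j) / y^(Suc (Suc j))"
    using y by (simp add: field_simps)
  then have E: "- (of_nat (Suc j) * (c - z)^j * (-1) * inverse (((c - z)^(Suc j))^2)) = of_nat (Suc j) / (c - z)^(Suc (Suc j))"
    unfolding p y_def .
  note d2 = d1[unfolded E]
  show ?thesis using d2 by (simp only: inverse_eq_divide)
qed

lemma fac_alg: "-(F::complex)/K * (N/B - N/A) = -(N*F)/K * (1/B - 1/A)"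
  by (simp add: divide_inverse algebra_simps)

lemma Ph_deriv: assumes p: "p \<in> Ytot"
  shows "((\<lambda>w. Ph n (w, snd p)) has_field_derivative Ph (Suc n) p) (at (fst p))"
proof -
  obtain z x where pz: "p = (z,x)" by (cases p) blast
  have z: "cmod z < 1" and x: "x \<in> X1" using p pz by (auto simp: Ytot_iff)
  show ?thesis
  proof (cases "nonpole x")
    case False
    then have xp: "x = pole1 \<or> x = pole2" using x by (auto simp: nonpole_def)
    have c: "(\<lambda>w. Ph n (w, x)) = (\<lambda>w. Ph n (z, x))"
    proof (cases n)
      case 0 then show ?thesis using Ph_pole_const(1)[OF xp] by simp
    next
      case (Suc m) then show ?thesis using Ph_pole_const(2)[OF xp] by simp
    qed
    have "Ph (Suc n) (z,x) = 0" using Ph_pole_const(2)[OF xp] .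
    then show ?thesis using pz c by simp
  next
    case True
    define a where "a = aa x"
    define b where "b = bb x"
    have ua: "cmod a = 1" and ub: "cmod b = 1" using nonpole_facts[OF True] bb_unit[OF True] by (auto simp: a_def b_def)
    have a0: "a \<noteq> 0" "b \<noteq> 0" using ua ub by auto
    have az: "a - z \<noteq> 0" "b - z \<noteq> 0" using unit_sub_ne ua ub z by auto
    have ra: "1 - z/a \<notin> \<real>\<^sub>\<le>\<^sub>0" "1 - z/b \<notin> \<real>\<^sub>\<le>\<^sub>0"
      using Re_pos_not_nonpos one_minus_div_re ua ub z by auto
    show ?thesis
    proof (cases n)
      case 0
      have d1: "((\<lambda>w. Ln (1 - w/b)) has_field_derivative inverse (1 - z/b) * (- 1/b)) (at z)"
      proof -
        have g: "((\<lambda>w. 1 - w/b) has_field_derivative -1/b) (at z)" using a0 by (auto intro!: derivative_eq_intros)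
        show ?thesis using DERIV_chain2[of Ln "inverse(1 - z/b)" "\<lambda>w. 1 - w/b" z "-1/b" UNIV] has_field_derivative_Ln[OF ra(2)] g by simp
      qed
      have d2: "((\<lambda>w. Ln (1 - w/a)) has_field_derivative inverse (1 - z/a) * (- 1/a)) (at z)"
      proof -
        have g: "((\<lambda>w. 1 - w/a) has_field_derivative -1/a) (at z)" using a0 by (auto intro!: derivative_eq_intros)
        show ?thesis using DERIV_chain2[of Ln "inverse(1 - z/a)" "\<lambda>w. 1 - w/a" z "-1/a" UNIV] has_field_derivative_Ln[OF ra(1)] g by simp
      qed
      have d: "((\<lambda>w. of_real (thx x/(2*pi)) + (Ln (1 - w/b) - Ln (1 - w/a)) / (\<i> * of_real pi)) has_field_derivative
          (inverse (1 - z/b) * (- 1/b) - inverse (1 - z/a) * (- 1/a)) / (\<i> * of_real pi)) (at z)"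
        using ra a0 by (intro derivative_eq_intros d1 d2) auto
      have e1: "inverse (1 - z/b) * (- 1/b) = - 1/(b - z)" using a0 az by (simp add: field_simps)
      have e2: "inverse (1 - z/a) * (- 1/a) = - 1/(a - z)" using a0 az by (simp add: field_simps)
      have "(inverse (1 - z/b) * (- 1/b) - inverse (1 - z/a) * (- 1/a)) / (\<i> * of_real pi) = Ph (Suc 0) (z,x)"
        unfolding e1 e2 by (simp add: a_def[symmetric] b_def[symmetric] diff_divide_distrib)
      then show ?thesis using d 0 pz by (simp add: a_def[symmetric] b_def[symmetric])
    next
      case (Suc m)
      have db: "((\<lambda>w. 1/(b - w)^(Suc m)) has_field_derivative of_nat (Suc m) / (b - z)^(Suc (Suc m))) (at z)"
        using inv_pow_deriv[OF az(2), of m] by simp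
      have da: "((\<lambda>w. 1/(a - w)^(Suc m)) has_field_derivative of_nat (Suc m) / (a - z)^(Suc (Suc m))) (at z)"
        using inv_pow_deriv[OF az(1), of m] by simp
      have d: "((\<lambda>w. - of_real (fact m) / (\<i> * of_real pi) * (1/(b - w)^(Suc m) - 1/(a - w)^(Suc m)))
          has_field_derivative - of_real (fact m) / (\<i> * of_real pi) * (of_nat (Suc m) / (b - z)^(Suc (Suc m)) - of_nat (Suc m) / (a - z)^(Suc (Suc m)))) (at z)"
        by (intro DERIV_cmult DERIV_diff db da)
      have "- of_real (fact m) / (\<i> * of_real pi) * (of_nat (Suc m) / (b - z)^(Suc (Suc m)) - of_nat (Suc m) / (a - z)^(Suc (Suc m)))
          = - of_real (fact (Suc m)) / (\<i> * of_real pi) * (1 / (b - z)^(Suc (Suc m)) - 1 / (a - z)^(Suc (Suc m)))"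
      proof -
        have "(of_real (fact (Suc m)) :: complex) = of_nat (Suc m) * of_real (fact m)"
          by (simp add: fact_Suc)
        then show ?thesis using fac_alg[of "of_real (fact m)" "\<i> * of_real pi" "of_nat (Suc m)" "(b - z)^(Suc (Suc m))" "(a - z)^(Suc (Suc m))"]
          by (simp only: mult.commute)
      qed
      then show ?thesis using d Suc pz by (simp only: a_def[symmetric] b_def[symmetric] Ph.simps fst_conv snd_conv)
    qed
  qed
qed

definition NN :: "(complex \<times> (complex \<times> real)) set" where
  "NN = {p. fst (snd p) \<noteq> 0}"

lemma open_NN: "open NN"
  unfolding NN_def by (rule open_Collect_neq) (auto intro!: continuous_intros)

lemma cont_Ytot_from:
  assumes c: "continuous_on (Ytot \<inter> NN) f"
    and l: "\<And>p. p \<in> Ytot \<Longrightarrow> fst (snd p) = 0 \<Longrightarrow> (f \<longlongrightarrow> f p) (at p within Ytot)"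
  shows "continuous_on Ytot f"
  unfolding continuous_on_def
proof
  fix p assume p: "p \<in> Ytot"
  show "(f \<longlongrightarrow> f p) (at p within Ytot)"
  proof (cases "fst (snd p) = 0")
    case True then show ?thesis using l p by simp
  next
    case False
    then have pN: "p \<in> NN" by (simp add: NN_def)
    have "(f \<longlongrightarrow> f p) (at p within Ytot \<inter> NN)" using c p pN by (simp add: continuous_on_def)
    moreover have "at p within Ytot = at p within Ytot \<inter> NN"
      by (rule at_within_nhd[OF pN open_NN]) auto
    ultimately show ?thesis by simp
  qed
qed

lemma X1_snd_bound: assumes "x \<in> X1" shows "-1 \<le> snd x \<and> snd x \<le> 1"
proof -
  have e: "(cmod (fst x))^2 + (snd x)^2 = 1" using assms by (simp add: X1_iff)
  have "0 \<le> (cmod (fst x))^2" by simp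
  then have "(snd x)^2 \<le> 1" using e by linarith
  then have "\<bar>snd x\<bar> \<le> 1" by (simp add: abs_square_le_1)
  then show ?thesis by auto
qed

lemma thx_cont: "continuous_on Ytot (\<lambda>p. thx (snd p))"
  unfolding thx_def
proof (intro continuous_intros continuous_on_arccos ballI)
  fix p :: "complex \<times> (complex \<times> real)" assume "p \<in> Ytot"
  then have "snd p \<in> X1" by (simp add: Ytot_iff)
  then show "-1 \<le> snd (snd p) \<and> snd (snd p) \<le> 1" by (rule X1_snd_bound)
qed

definition ep :: "complex \<times> real \<Rightarrow> real" where
  "ep x = cmod (cis (thx x) - 1)"

lemma ep_cont: "continuous_on Ytot (\<lambda>p. ep (snd p))"
  unfolding ep_def cis_conv_exp by (intro continuous_intros thx_cont)

lemma ep_pole: "fst x = 0 \<Longrightarrow> x \<in> X1 \<Longrightarrow> ep x = 0"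
proof -
  assume "fst x = 0" "x \<in> X1"
  then have "(snd x)^2 = 1" by (simp add: X1_iff)
  then have "snd x = 1 \<or> snd x = -1" by (simp add: power2_eq_1_iff)
  then show "ep x = 0"
  proof
    assume "snd x = 1" then show ?thesis by (simp add: ep_def thx_def)
  next
    assume "snd x = -1" then show ?thesis by (simp add: ep_def thx_def complex_eq_iff)
  qed
qed

lemma fst0_pole: "x \<in> X1 \<Longrightarrow> fst x = 0 \<Longrightarrow> x = pole1 \<or> x = pole2"
proof -
  assume "x \<in> X1" "fst x = 0"
  then have "(snd x)^2 = 1" by (simp add: X1_iff)
  then have "snd x = 1 \<or> snd x = -1" by (simp add: power2_eq_1_iff)
  then show ?thesis using \<open>fst x = 0\<close> by (cases x) (auto simp: pole1_def pole2_def)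
qed

lemma nonpole_iff: assumes "x \<in> X1" shows "nonpole x \<longleftrightarrow> fst x \<noteq> 0"
proof
  assume "nonpole x" then show "fst x \<noteq> 0" by (rule nonpole_facts(1))
next
  assume "fst x \<noteq> 0"
  then have "x \<noteq> pole1" "x \<noteq> pole2" by (auto simp: pole1_def pole2_def)
  then show "nonpole x" using assms by (simp add: nonpole_def)
qed

lemma ab_diff: "nonpole x \<Longrightarrow> cmod (bb x - aa x) = ep x"
proof -
  assume x: "nonpole x"
  have "bb x - aa x = aa x * (cis (thx x) - 1)" by (simp add: bb_def algebra_simps)
  then show ?thesis using nonpole_facts(2)[OF x] by (simp add: norm_mult ep_def)
qed

lemma aa_cont: "continuous_on (Ytot \<inter> NN) (\<lambda>p. aa (snd p))"
  unfolding aa_def NN_def by (intro continuous_intros) auto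

lemma bb_cont: "continuous_on (Ytot \<inter> NN) (\<lambda>p. bb (snd p))"
  unfolding bb_def cis_conv_exp
  by (intro continuous_intros aa_cont continuous_on_subset[OF thx_cont]) auto

lemma lim_from_bound:
  assumes b: "\<And>q. q \<in> Ytot \<Longrightarrow> norm (f q - f p) \<le> h q" and hc: "continuous_on Ytot h"
    and h0: "h p = 0" and p: "p \<in> Ytot"
  shows "(f \<longlongrightarrow> f p) (at p within Ytot)"
proof -
  have "(h \<longlongrightarrow> h p) (at p within Ytot)" using hc p by (simp add: continuous_on_def)
  then have "(h \<longlongrightarrow> 0) (at p within Ytot)" using h0 by simp
  moreover have "\<forall>\<^sub>F q in at p within Ytot. norm (f q - f p) \<le> h q"
    using b by (auto simp: eventually_at_filter)
  ultimately have "((\<lambda>q. f q - f p) \<longlongrightarrow> 0) (at p within Ytot)" by (rule Lim_null_comparison[rotated])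
  then show ?thesis by (simp add: LIM_zero_iff)
qed

lemma Ln_quot: assumes "0 < Re p1" "0 < Re p2" shows "Ln (p1/p2) = Ln p1 - Ln p2"
proof -
  have n: "p1 \<noteq> 0" "p2 \<noteq> 0" using assms by auto
  have r2: "p2 \<notin> \<real>\<^sub>\<le>\<^sub>0" using Re_pos_not_nonpos assms by auto
  have a1: "\<bar>Arg p1\<bar> < pi/2" "\<bar>Arg p2\<bar> < pi/2" using Arg_Re_pos assms by auto
  have i1: "Im (Ln p1) = Arg p1" "Im (Ln p2) = Arg p2" using Arg_eq_Im_Ln n by auto
  have li: "Ln (inverse p2) = - Ln p2" using Ln_inverse[OF r2] .
  have "Ln (p1 * inverse p2) = Ln p1 + Ln (inverse p2)"
    by (rule Ln_times_simple) (use n a1 i1 li in auto)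
  then show ?thesis using li by (simp add: divide_inverse)
qed

definition qf :: "complex \<times> (complex \<times> real) \<Rightarrow> complex" where
  "qf p = (1 - fst p / bb (snd p)) / (1 - fst p / aa (snd p))"

lemma qf_pole: "fst (snd p) = 0 \<Longrightarrow> qf p = 1"
  by (simp add: qf_def bb_def aa_def)

lemma Ytot_split: assumes "p \<in> Ytot"
  obtains "nonpole (snd p)" | "fst (snd p) = 0" "snd p = pole1 \<or> snd p = pole2"
  using assms nonpole_iff[of "snd p"] fst0_pole[of "snd p"] by (auto simp: Ytot_iff)

lemma Ph0_alt: assumes p: "p \<in> Ytot"
  shows "Ph 0 p = of_real (thx (snd p)/(2*pi)) + Ln (qf p) / (\<i> * of_real pi)"
  using p
proof (cases rule: Ytot_split)
  case 1
  have z: "cmod (fst p) < 1" using p by (simp add: Ytot_iff)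
  have "Ln (qf p) = Ln (1 - fst p / bb (snd p)) - Ln (1 - fst p / aa (snd p))"
    unfolding qf_def by (rule Ln_quot) (use one_minus_div_re z nonpole_facts(2)[OF 1] bb_unit[OF 1] in auto)
  then show ?thesis by simp
next
  case 2
  then show ?thesis using qf_pole[of p] by (simp add: aa_def bb_def)
qed

lemma qf_ok: assumes p: "p \<in> Ytot" shows "qf p \<notin> \<real>\<^sub>\<le>\<^sub>0"
  using p
proof (cases rule: Ytot_split)
  case 1
  have z: "cmod (fst p) < 1" using p by (simp add: Ytot_iff)
  define p1 where "p1 = 1 - fst p / bb (snd p)"
  define p2 where "p2 = 1 - fst p / aa (snd p)"
  have r: "0 < Re p1" "0 < Re p2" unfolding p1_def p2_def using one_minus_div_re z nonpole_facts(2)[OF 1] bb_unit[OF 1] by auto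
  show ?thesis
  proof
    assume "qf p \<in> \<real>\<^sub>\<le>\<^sub>0"
    then obtain r0 where r0: "qf p = of_real r0" "r0 \<le> 0" by (auto simp: nonpos_Reals_def)
    have "p2 \<noteq> 0" using r by auto
    then have "p1 = of_real r0 * p2" using r0 unfolding qf_def p1_def[symmetric] p2_def[symmetric] by (simp add: field_simps)
    then have "Re p1 = r0 * Re p2" by simp
    moreover have "r0 * Re p2 \<le> 0" using r0(2) r(2) by (simp add: mult_nonpos_nonneg)
    ultimately show False using r(1) by simp
  qed
next
  case 2 then show ?thesis using qf_pole[of p] by simp
qed

lemma qf_bound: assumes p: "p \<in> Ytot" shows "cmod (qf p - 1) \<le> ep (snd p) / (1 - cmod (fst p))"
  using p
proof (cases rule: Ytot_split)
  case 1
  define z where "z = fst p"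
  define a where "a = aa (snd p)"
  define b where "b = bb (snd p)"
  have z: "cmod z < 1" using p by (simp add: Ytot_iff z_def)
  have ua: "cmod a = 1" and ub: "cmod b = 1" using nonpole_facts(2)[OF 1] bb_unit[OF 1] by (auto simp: a_def b_def)
  have a0: "a \<noteq> 0" "b \<noteq> 0" using ua ub by auto
  have az: "a - z \<noteq> 0" using unit_sub_ne ua z by auto
  have e: "qf p - 1 = z * (b - a) / (b * (a - z))"
    unfolding qf_def z_def[symmetric] a_def[symmetric] b_def[symmetric] using a0 az by (simp add: field_simps)
  have d: "1 - cmod z \<le> cmod (a - z)" using ua norm_triangle_ineq2[of a z] by simp
  have dp: "0 < 1 - cmod z" using z by simp
  have "cmod (qf p - 1) = cmod z * cmod (b - a) / cmod (a - z)" unfolding e using ub by (simp add: norm_mult norm_divide)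
  also have "\<dots> \<le> cmod (b - a) / cmod (a - z)" using z by (simp add: divide_right_mono mult_left_le_one_le)
  also have "\<dots> \<le> cmod (b - a) / (1 - cmod z)" using d dp by (simp add: frac_le)
  also have "cmod (b - a) = ep (snd p)" using ab_diff[OF 1] by (simp add: a_def b_def)
  finally show ?thesis unfolding z_def .
next
  case 2
  have "0 \<le> ep (snd p)" by (simp add: ep_def)
  moreover have "0 < 1 - cmod (fst p)" using p by (simp add: Ytot_iff)
  ultimately show ?thesis using qf_pole[OF 2(1)] by simp
qed

lemma qf_cont: "continuous_on Ytot qf"
proof (rule cont_Ytot_from)
  show "continuous_on (Ytot \<inter> NN) qf"
  proof -
    have ne: "aa (snd p) \<noteq> 0" "bb (snd p) \<noteq> 0" "1 - fst p / aa (snd p) \<noteq> 0" if "p \<in> Ytot \<inter> NN" for p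
    proof -
      have np: "nonpole (snd p)" using that nonpole_iff by (auto simp: Ytot_iff NN_def)
      have z: "cmod (fst p) < 1" using that by (simp add: Ytot_iff)
      show "aa (snd p) \<noteq> 0" "bb (snd p) \<noteq> 0" using nonpole_facts(2)[OF np] bb_unit[OF np] by auto
      show "1 - fst p / aa (snd p) \<noteq> 0" using one_minus_div_re[OF nonpole_facts(2)[OF np] z] by auto
    qed
    show ?thesis unfolding qf_def
      by (intro continuous_intros aa_cont bb_cont) (use ne in auto)
  qed
next
  fix p assume p: "p \<in> Ytot" "fst (snd p) = 0"
  show "(qf \<longlongrightarrow> qf p) (at p within Ytot)"
  proof (rule lim_from_bound[where h = "\<lambda>q. ep (snd q) / (1 - cmod (fst q))"])
    show "cmod (qf q - qf p) \<le> ep (snd q) / (1 - cmod (fst q))" if "q \<in> Ytot" for q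
      using qf_bound[OF that] qf_pole[OF p(2)] by simp
    show "continuous_on Ytot (\<lambda>q. ep (snd q) / (1 - cmod (fst q)))"
      by (intro continuous_intros ep_cont) (auto simp: Ytot_iff)
    show "ep (snd p) / (1 - cmod (fst p)) = 0" using ep_pole p by (simp add: Ytot_iff)
  qed (use p in auto)
qed

lemma Ph0_cont: "continuous_on Ytot (Ph 0)"
proof -
  have "continuous_on Ytot (\<lambda>p. of_real (thx (snd p)/(2*pi)) + Ln (qf p) / (\<i> * of_real pi))"
    by (intro continuous_intros thx_cont continuous_on_Ln' qf_cont) (use qf_ok in auto)
  then show ?thesis by (rule continuous_on_eq) (rule Ph0_alt[symmetric])
qed


lemma pow_diff_bound: fixes A B :: complex assumes "cmod A \<le> 2" "cmod B \<le> 2"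
  shows "cmod (A^k - B^k) \<le> 2^k * real k * cmod (A - B)"
proof -
  have "cmod ((A/2)^k - (B/2)^k) \<le> real k * cmod (A/2 - B/2)"
    by (rule norm_power_diff) (use assms in \<open>auto simp: norm_divide\<close>)
  also have "cmod (A/2 - B/2) = cmod (A - B) / 2" by (simp add: diff_divide_distrib[symmetric] norm_divide)
  finally have 1: "cmod ((A/2)^k - (B/2)^k) \<le> real k * (cmod (A - B) / 2)" .
  have "A^k - B^k = 2^k * ((A/2)^k - (B/2)^k)" by (simp add: power_divide algebra_simps)
  then have "cmod (A^k - B^k) = 2^k * cmod ((A/2)^k - (B/2)^k)" by (simp add: norm_mult norm_power)
  also have "\<dots> \<le> 2^k * (real k * (cmod (A - B) / 2))" using 1 by simp
  also have "\<dots> \<le> 2^k * real k * cmod (A - B)" by simp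
  finally show ?thesis .
qed

lemma inv_pow_diff_bound: fixes A B :: complex
  assumes "cmod A \<le> 2" "cmod B \<le> 2" "0 < d" "d \<le> cmod A" "d \<le> cmod B"
  shows "cmod (1/B^k - 1/A^k) \<le> 2^k * real k * cmod (A - B) / d^(2*k)"
proof -
  have A0: "A \<noteq> 0" "B \<noteq> 0" using assms by auto
  have e: "1/B^k - 1/A^k = (A^k - B^k) / (A^k * B^k)" using A0 by (simp add: field_simps)
  have "d^k \<le> cmod A ^ k" "d^k \<le> cmod B ^ k" using assms by (auto intro: power_mono)
  then have "d^k * d^k \<le> cmod A ^ k * cmod B ^ k" using assms by (intro mult_mono) auto
  then have den: "d^(2*k) \<le> cmod (A^k * B^k)" by (simp add: norm_mult norm_power power_mult_distrib mult_2 power_add)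
  have dp: "0 < d^(2*k)" using assms by simp
  have "cmod (1/B^k - 1/A^k) = cmod (A^k - B^k) / cmod (A^k * B^k)" unfolding e by (simp add: norm_divide)
  also have "\<dots> \<le> cmod (A^k - B^k) / d^(2*k)" using den dp by (simp add: frac_le)
  also have "\<dots> \<le> 2^k * real k * cmod (A - B) / d^(2*k)"
    using pow_diff_bound[OF assms(1,2)] dp by (simp add: divide_right_mono)
  finally show ?thesis .
qed

lemma PhS_bound: assumes p: "p \<in> Ytot"
  shows "cmod (Ph (Suc m) p) \<le> fact m / pi * (2^(Suc m) * real (Suc m) * ep (snd p) / (1 - cmod (fst p))^(2*Suc m))"
  using p
proof (cases rule: Ytot_split)
  case 1
  define z where "z = fst p"
  define a where "a = aa (snd p)"
  define b where "b = bb (snd p)"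
  have z: "cmod z < 1" using p by (simp add: Ytot_iff z_def)
  have ua: "cmod a = 1" and ub: "cmod b = 1" using nonpole_facts(2)[OF 1] bb_unit[OF 1] by (auto simp: a_def b_def)
  have d: "1 - cmod z \<le> cmod (a - z)" "1 - cmod z \<le> cmod (b - z)"
    using ua ub norm_triangle_ineq2[of a z] norm_triangle_ineq2[of b z] by auto
  have u2: "cmod (a - z) \<le> 2" "cmod (b - z) \<le> 2"
    using ua ub z norm_triangle_ineq4[of a z] norm_triangle_ineq4[of b z] by auto
  have dp: "0 < 1 - cmod z" using z by simp
  have ab: "cmod ((a - z) - (b - z)) = ep (snd p)" using ab_diff[OF 1] by (simp add: a_def b_def norm_minus_commute)
  have "cmod (Ph (Suc m) p) = fact m / pi * cmod (1/(b - z)^(Suc m) - 1/(a - z)^(Suc m))"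
    by (simp add: z_def a_def b_def norm_mult norm_divide)
  also have "\<dots> \<le> fact m / pi * (2^(Suc m) * real (Suc m) * ep (snd p) / (1 - cmod z)^(2*Suc m))"
    using inv_pow_diff_bound[OF u2(1) u2(2) dp d(1) d(2), of "Suc m"] ab
    by (intro mult_left_mono) auto
  finally show ?thesis unfolding z_def .
next
  case 2
  have "0 \<le> ep (snd p)" by (simp add: ep_def)
  moreover have "0 < 1 - cmod (fst p)" using p by (simp add: Ytot_iff)
  moreover have "Ph (Suc m) (fst p, snd p) = 0" by (rule Ph_pole_const(2)[OF 2(2)])
  ultimately show ?thesis by simp
qed

lemma PhS_cont: "continuous_on Ytot (Ph (Suc m))"
proof (rule cont_Ytot_from)
  show "continuous_on (Ytot \<inter> NN) (Ph (Suc m))"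
  proof -
    have ne: "bb (snd p) - fst p \<noteq> 0" "aa (snd p) - fst p \<noteq> 0" if "p \<in> Ytot \<inter> NN" for p
    proof -
      have np: "nonpole (snd p)" using that nonpole_iff by (auto simp: Ytot_iff NN_def)
      have z: "cmod (fst p) < 1" using that by (simp add: Ytot_iff)
      show "bb (snd p) - fst p \<noteq> 0" "aa (snd p) - fst p \<noteq> 0"
        using unit_sub_ne nonpole_facts(2)[OF np] bb_unit[OF np] z by auto
    qed
    have "continuous_on (Ytot \<inter> NN) (\<lambda>p. - of_real (fact m) / (\<i> * of_real pi) * (1/(bb (snd p) - fst p)^(Suc m) - 1/(aa (snd p) - fst p)^(Suc m)))"
      by (intro continuous_intros aa_cont bb_cont) (use ne in auto)
    then show ?thesis by simp
  qed
next
  fix p assume p: "p \<in> Ytot" "fst (snd p) = 0"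
  have pp: "snd p = pole1 \<or> snd p = pole2" using fst0_pole p by (auto simp: Ytot_iff)
  have "Ph (Suc m) (fst p, snd p) = 0" by (rule Ph_pole_const(2)[OF pp])
  then have P0: "Ph (Suc m) p = 0" by simp
  show "(Ph (Suc m) \<longlongrightarrow> Ph (Suc m) p) (at p within Ytot)"
  proof (rule lim_from_bound[where h = "\<lambda>q. fact m / pi * (2^(Suc m) * real (Suc m) * ep (snd q) / (1 - cmod (fst q))^(2*Suc m))"])
    show "cmod (Ph (Suc m) q - Ph (Suc m) p) \<le> fact m / pi * (2^(Suc m) * real (Suc m) * ep (snd q) / (1 - cmod (fst q))^(2*Suc m))" if "q \<in> Ytot" for q
      using PhS_bound[OF that] P0 by simp
    show "continuous_on Ytot (\<lambda>q. fact m / pi * (2^(Suc m) * real (Suc m) * ep (snd q) / (1 - cmod (fst q))^(2*Suc m)))"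
      by (intro continuous_intros ep_cont) (auto simp: Ytot_iff)
    show "fact m / pi * (2^(Suc m) * real (Suc m) * ep (snd p) / (1 - cmod (fst p))^(2*Suc m)) = 0"
      using ep_pole p by (simp add: Ytot_iff)
  qed (use p in auto)
qed

lemma Ph_cont: "continuous_on Ytot (Ph n)"
proof (cases n)
  case 0 show ?thesis unfolding 0 by (rule Ph0_cont)
next
  case (Suc k) show ?thesis unfolding Suc by (rule PhS_cont)
qed

type_synonym trm = "complex \<times> nat \<times> complex \<times> nat"

fun Tm :: "trm \<Rightarrow> complex \<times> (complex \<times> real) \<Rightarrow> real" where
  "Tm (c,n,d,m) p = Re (c * Ph n p) * Re (d * Ph m p)"

definition EvL :: "trm list \<Rightarrow> complex \<times> (complex \<times> real) \<Rightarrow> real" where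
  "EvL L p = sum_list (map (\<lambda>t. Tm t p) L)"

fun dT :: "complex \<Rightarrow> trm \<Rightarrow> trm list" where
  "dT e (c,n,d,m) = [(c*e, Suc n, d, m), (c, n, d*e, Suc m)]"

definition dL :: "complex \<Rightarrow> trm list \<Rightarrow> trm list" where
  "dL e L = concat (map (dT e) L)"

primrec Lof :: "bool list \<Rightarrow> trm list" where
  "Lof [] = [(1,0,1,0)]"
| "Lof (b # ws) = dL (ldir b) (Lof ws)"

lemma dir_deriv: assumes p: "p \<in> Ytot"
  shows "((\<lambda>t. Re (c * Ph n (fst p + e * of_real t, snd p))) has_real_derivative Re (c * e * Ph (Suc n) p)) (at 0)"
proof -
  have g: "((\<lambda>w. fst p + e * w) has_field_derivative e) (at 0)" by (auto intro!: derivative_eq_intros)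
  have f: "((\<lambda>w. Ph n (w, snd p)) has_field_derivative Ph (Suc n) p) (at (fst p + e * 0))"
    using Ph_deriv[OF p] by simp
  have "((\<lambda>w. Ph n (fst p + e * w, snd p)) has_field_derivative Ph (Suc n) p * e) (at 0)"
    using DERIV_chain2[OF f g] by simp
  then have "((\<lambda>w. c * Ph n (fst p + e * w, snd p)) has_field_derivative c * (Ph (Suc n) p * e)) (at (of_real 0))"
    by (intro DERIV_cmult) simp
  then have "((\<lambda>t. c * Ph n (fst p + e * of_real t, snd p)) has_vector_derivative c * (Ph (Suc n) p * e)) (at 0)"
    by (rule has_vector_derivative_real_field)
  then show ?thesis using has_field_derivative_Re by (fastforce simp: mult_ac)
qed

lemma Tm_deriv: assumes p: "p \<in> Ytot"
  shows "((\<lambda>t. Tm tm (fst p + e * of_real t, snd p)) has_real_derivative EvL (dT e tm) p) (at 0)"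
proof -
  obtain c n d m where tm: "tm = (c,n,d,m)" by (cases tm) blast
  have d1: "((\<lambda>t. Re (c * Ph n (fst p + e * of_real t, snd p))) has_real_derivative Re (c * e * Ph (Suc n) p)) (at 0)"
    by (rule dir_deriv[OF p])
  have d2: "((\<lambda>t. Re (d * Ph m (fst p + e * of_real t, snd p))) has_real_derivative Re (d * e * Ph (Suc m) p)) (at 0)"
    by (rule dir_deriv[OF p])
  have "((\<lambda>t. Re (c * Ph n (fst p + e * of_real t, snd p)) * Re (d * Ph m (fst p + e * of_real t, snd p))) has_real_derivative
      Re (c * e * Ph (Suc n) p) * Re (d * Ph m p) + Re (d * e * Ph (Suc m) p) * Re (c * Ph n p)) (at 0)"
    using DERIV_mult[OF d1 d2] by simp
  then show ?thesis unfolding tm by (simp add: EvL_def algebra_simps)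
qed

lemma EvL_deriv: assumes p: "p \<in> Ytot"
  shows "((\<lambda>t. EvL L (fst p + e * of_real t, snd p)) has_real_derivative EvL (dL e L) p) (at 0)"
proof (induction L)
  case Nil then show ?case by (simp add: EvL_def dL_def)
next
  case (Cons tm L)
  have "((\<lambda>t. Tm tm (fst p + e * of_real t, snd p) + EvL L (fst p + e * of_real t, snd p)) has_real_derivative
       EvL (dT e tm) p + EvL (dL e L) p) (at 0)"
    by (rule DERIV_add[OF Tm_deriv[OF p] Cons.IH])
  then show ?case by (simp add: EvL_def dL_def)
qed

lemma EvL_cont: "continuous_on Ytot (EvL L)"
proof (induction L)
  case Nil then show ?case by (simp add: EvL_def)
next
  case (Cons tm L)
  obtain c n d m where tm: "tm = (c,n,d,m)" by (cases tm) blast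
  have "continuous_on Ytot (\<lambda>p. Re (c * Ph n p) * Re (d * Ph m p) + EvL L p)"
    by (intro continuous_intros Ph_cont Cons.IH)
  then show ?case unfolding tm by (simp add: EvL_def)
qed

lemma ev_Ytot: assumes p: "p \<in> Ytot" and that: "cmod e = 1" shows "\<forall>\<^sub>F t in nhds 0. (fst p + e * of_real t, snd p) \<in> Ytot"
proof -
  have r: "0 < 1 - cmod (fst p)" using p by (simp add: Ytot_iff)
  have "\<forall>t::real. dist t 0 < 1 - cmod (fst p) \<longrightarrow> (fst p + e * of_real t, snd p) \<in> Ytot"
  proof (intro allI impI)
    fix t :: real assume "dist t 0 < 1 - cmod (fst p)"
    then have "\<bar>t\<bar> < 1 - cmod (fst p)" by simp
    moreover have "cmod (fst p + e * of_real t) \<le> cmod (fst p) + \<bar>t\<bar>"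
      using norm_triangle_ineq[of "fst p" "e * of_real t"] that by (simp add: norm_mult)
    ultimately show "(fst p + e * of_real t, snd p) \<in> Ytot" using p by (simp add: Ytot_iff)
  qed
  then show ?thesis unfolding eventually_nhds_metric using r by blast
qed

lemma ldir_norm: "cmod (ldir b) = 1" by (simp add: ldir_def)

lemma ldiff_EvL: assumes F: "\<forall>q\<in>Ytot. F q = EvL (Lof []) q"
  shows "p \<in> Ytot \<Longrightarrow> ldiff ws F p = EvL (Lof ws) p"
proof (induction ws arbitrary: p)
  case Nil then show ?case using F by simp
next
  case (Cons b ws)
  have ev: "\<forall>\<^sub>F t in nhds 0. ldiff ws F (fst p + ldir b * of_real t, snd p) = EvL (Lof ws) (fst p + ldir b * of_real t, snd p)"
    using ev_Ytot[OF Cons.prems ldir_norm[of b]] by (rule eventually_mono) (rule Cons.IH)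
  have "deriv (\<lambda>t. ldiff ws F (fst p + ldir b * of_real t, snd p)) 0 = deriv (\<lambda>t. EvL (Lof ws) (fst p + ldir b * of_real t, snd p)) 0"
    by (rule deriv_cong_ev[OF ev refl])
  also have "\<dots> = EvL (dL (ldir b) (Lof ws)) p" by (rule DERIV_imp_deriv[OF EvL_deriv[OF Cons.prems]])
  finally show ?case by simp
qed

lemma leaf_smooth_EvL: assumes F: "\<forall>q\<in>Ytot. F q = EvL (Lof []) q"
  shows "leaf_smooth F"
  unfolding leaf_smooth_def
proof (intro allI conjI ballI)
  fix ws
  show "continuous_on Ytot (ldiff ws F)"
    using EvL_cont by (rule continuous_on_eq) (use ldiff_EvL[OF F] in auto)
  fix b p assume p: "p \<in> Ytot"
  have ev: "\<forall>\<^sub>F t in nhds 0. EvL (Lof ws) (fst p + ldir b * of_real t, snd p) = ldiff ws F (fst p + ldir b * of_real t, snd p)"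
    using ev_Ytot[OF p ldir_norm[of b]] by (rule eventually_mono) (rule ldiff_EvL[OF F, symmetric])
  have "((\<lambda>t. ldiff ws F (fst p + ldir b * of_real t, snd p)) has_real_derivative EvL (dL (ldir b) (Lof ws)) p) (at 0)"
    using EvL_deriv[OF p] DERIV_cong_ev[OF refl ev refl] by blast
  then show "(\<lambda>t. ldiff ws F (fst p + ldir b * of_real t, snd p)) differentiable at 0"
    by (rule differentiableI[OF has_field_derivative_imp_has_derivative])
qed

definition LL :: "complex \<times> (complex \<times> real) \<Rightarrow> real" where
  "LL p = (1 - (cmod (fst p))^2)^2 / 2 * (cmod (Ph (Suc 0) p))^2"

lemma hlap_EvL: assumes F: "\<forall>q\<in>Ytot. F q = EvL (Lof []) q" and p: "p \<in> Ytot"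
  shows "hlap F p = LL p"
proof -
  have 1: "ldiff [True, True] F p = EvL (Lof [True,True]) p" by (rule ldiff_EvL[OF F p])
  have 2: "ldiff [False, False] F p = EvL (Lof [False,False]) p" by (rule ldiff_EvL[OF F p])
  have "ldiff [True, True] F p + ldiff [False, False] F p = EvL (Lof [True,True]) p + EvL (Lof [False,False]) p"
    unfolding 1 2 ..
  also have "\<dots> = 2 * ((Re (Ph (Suc 0) p))^2 + (Im (Ph (Suc 0) p))^2)"
    by (simp add: EvL_def dL_def ldir_def power2_eq_square algebra_simps del: Ph.simps)
  also have "\<dots> = 2 * (cmod (Ph (Suc 0) p))^2" by (simp add: cmod_power2 del: Ph.simps)
  finally have "ldiff [True, True] F p + ldiff [False, False] F p = 2 * (cmod (Ph (Suc 0) p))^2" .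
  then show ?thesis unfolding hlap_def LL_def by simp
qed

lemma Re_Ph0: assumes p: "p \<in> Ytot" shows "Re (Ph 0 p) = uu p"
  using p
proof (cases rule: Ytot_split)
  case 1
  have z: "cmod (fst p) < 1" using p by (simp add: Ytot_iff)
  have n: "1 - fst p / bb (snd p) \<noteq> 0" "1 - fst p / aa (snd p) \<noteq> 0"
    using one_minus_div_re[OF nonpole_facts(2)[OF 1] z] one_minus_div_re[OF bb_unit[OF 1] z] by auto
  show ?thesis using Arg_eq_Im_Ln[OF n(1)] Arg_eq_Im_Ln[OF n(2)]
    by (simp add: uu_def Re_divide power2_eq_square field_simps)
next
  case 2
  then show ?thesis using aa_pole[OF 2(2)] by (simp add: uu_def)
qed

definition vv :: "complex \<times> (complex \<times> real) \<Rightarrow> real" where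
  "vv p = uu p * uu p"

lemma vv_EvL: "p \<in> Ytot \<Longrightarrow> vv p = EvL (Lof []) p"
  using Re_Ph0 by (simp add: vv_def EvL_def del: Ph.simps)

lemma vv_cont: "continuous_on Ytot vv"
  using EvL_cont[of "Lof []"] by (rule continuous_on_eq) (simp add: vv_EvL)

lemma vv_invariant: "grp G \<Longrightarrow> invariant G vv"
  using uu_invariant unfolding invariant_def vv_def by simp

definition KK :: "complex \<times> (complex \<times> real) \<Rightarrow> real" where
  "KK p = (1 - (cmod (fst p))^2) * cmod (Ph (Suc 0) p)"

lemma LL_KK: "LL p = (KK p)^2 / 2"
  by (simp add: LL_def KK_def power_mult_distrib del: Ph.simps)

lemma Ph1_nonpole: assumes "nonpole (snd p)" "cmod (fst p) < 1"
  shows "cmod (Ph (Suc 0) p) = cmod (bb (snd p) - aa (snd p)) / (pi * cmod (bb (snd p) - fst p) * cmod (aa (snd p) - fst p))"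
proof -
  define z where "z = fst p"
  define a where "a = aa (snd p)"
  define b where "b = bb (snd p)"
  have n: "a - z \<noteq> 0" "b - z \<noteq> 0" using unit_sub_ne nonpole_facts(2)[OF assms(1)] bb_unit[OF assms(1)] assms(2)
    by (auto simp: a_def b_def z_def)
  have "1/(b - z) - 1/(a - z) = (a - b) / ((b - z) * (a - z))" using n by (simp add: field_simps)
  then have "Ph (Suc 0) p = - 1 / (\<i> * of_real pi) * ((a - b) / ((b - z) * (a - z)))"
    by (simp add: a_def b_def z_def)
  then have "cmod (Ph (Suc 0) p) = cmod (a - b) / (pi * cmod (b - z) * cmod (a - z))"
    by (simp add: norm_mult norm_divide)
  then show ?thesis by (simp add: a_def b_def z_def norm_minus_commute)
qed

lemma KK_alg: fixes Da Db Dz dba dbz daz w :: real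
  assumes "Da \<noteq> 0" "Db \<noteq> 0" "Dz \<noteq> 0" "0 < pi"
  shows "(w / Dz^2) * ((dba / (Db * Da)) / (pi * (dbz / (Db * Dz)) * (daz / (Da * Dz)))) = w * (dba / (pi * dbz * daz))"
  using assms by (simp add: field_simps power2_eq_square)

lemma KK_inv_su11: assumes g: "g \<in> su11" and p: "p \<in> Ytot"
  shows "KK (mob g (fst p), arcact g (snd p)) = KK p"
  using p
proof (cases rule: Ytot_split)
  case 2
  then have "arcact g (snd p) = snd p" using arcact_pole[of g] by auto
  moreover have "Ph (Suc 0) (w, snd p) = 0" for w by (rule Ph_pole_const(2)[OF 2(2)])
  moreover have "Ph (Suc 0) (fst p, snd p) = 0" by (rule Ph_pole_const(2)[OF 2(2)])
  ultimately show ?thesis unfolding KK_def by (simp del: Ph.simps)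
next
  case 1
  define z where "z = fst p"
  define a where "a = aa (snd p)"
  define b where "b = bb (snd p)"
  have z: "cmod z < 1" using p by (simp add: Ytot_iff z_def)
  have ua: "cmod a = 1" and ub: "cmod b = 1" using nonpole_facts(2)[OF 1] bb_unit[OF 1] by (auto simp: a_def b_def)
  note n = arcact_nonpole[OF g 1]
  have gz: "cmod (mob g z) < 1" using mob_disc[OF g z] .
  have D: "Dn g z \<noteq> 0" "Dn g a \<noteq> 0" "Dn g b \<noteq> 0" using Dn_nonzero g z ua ub by auto
  have "KK (mob g z, arcact g (snd p)) = (1 - (cmod (mob g z))^2) * (cmod (mob g b - mob g a) / (pi * cmod (mob g b - mob g z) * cmod (mob g a - mob g z)))"
    unfolding KK_def using Ph1_nonpole[of "(mob g z, arcact g (snd p))"] n gz by (simp add: a_def b_def del: Ph.simps)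
  also have "\<dots> = ((1 - (cmod z)^2) / (cmod (Dn g z))^2) * ((cmod (b - a) / (cmod (Dn g b) * cmod (Dn g a))) /
      (pi * (cmod (b - z) / (cmod (Dn g b) * cmod (Dn g z))) * (cmod (a - z) / (cmod (Dn g a) * cmod (Dn g z)))))"
    unfolding one_minus_mob[OF g D(1)] mob_diff[OF g D(3) D(2)] mob_diff[OF g D(3) D(1)] mob_diff[OF g D(2) D(1)]
    by (simp add: norm_divide norm_mult)
  also have "\<dots> = (1 - (cmod z)^2) * (cmod (b - a) / (pi * cmod (b - z) * cmod (a - z)))"
    by (rule KK_alg) (use D in auto)
  also have "\<dots> = KK p" unfolding KK_def using Ph1_nonpole[OF 1] z by (simp add: a_def b_def z_def del: Ph.simps)
  finally show ?thesis by (simp add: z_def)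
qed

lemma KK_gact: "g \<in> su11 \<Longrightarrow> p \<in> Ytot \<Longrightarrow> KK (gact g p) = KK p"
  using KK_inv_su11[OF ginv_su11] by (simp add: gact_def)

lemma LL_invariant: "grp G \<Longrightarrow> invariant G LL"
  unfolding invariant_def grp_def LL_KK using KK_gact by auto

lemma KK_nonneg: "p \<in> Ytot \<Longrightarrow> 0 \<le> KK p"
proof -
  assume "p \<in> Ytot"
  then have "(cmod (fst p))^2 \<le> 1" by (simp add: Ytot_iff abs_square_le_1)
  then show ?thesis unfolding KK_def by simp
qed

lemma KK_pos: assumes p: "p \<in> Ytot" and np: "nonpole (snd p)" shows "0 < KK p"
proof -
  have z: "cmod (fst p) < 1" using p by (simp add: Ytot_iff)
  then have z2: "(cmod (fst p))^2 < 1" by (simp add: abs_square_less_1)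
  have "cis (thx (snd p)) \<noteq> 1"
  proof
    assume "cis (thx (snd p)) = 1"
    then have "cis (thx (snd p)) = cis 0" by simp
    then show False using cis_eq_in_range[of "thx (snd p)" 0] nonpole_facts[OF np] by auto
  qed
  moreover have "aa (snd p) \<noteq> 0" using nonpole_facts(2)[OF np] by auto
  ultimately have "bb (snd p) - aa (snd p) \<noteq> 0" by (simp add: bb_def)
  moreover have "bb (snd p) - fst p \<noteq> 0" "aa (snd p) - fst p \<noteq> 0"
    using unit_sub_ne nonpole_facts(2)[OF np] bb_unit[OF np] z by auto
  ultimately have "0 < cmod (Ph (Suc 0) p)" using Ph1_nonpole[OF np z] by (simp del: Ph.simps)
  then show ?thesis unfolding KK_def using z2 by (simp del: Ph.simps)
qed

lemma LL_pos: assumes "p \<in> Ytot" "nonpole (snd p)" shows "0 < LL p"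
proof -
  have "0 < KK p" using KK_pos[OF assms] .
  then have "0 < (KK p)^2" by simp
  then show ?thesis by (simp add: LL_KK)
qed

lemma LL_nonneg: "0 \<le> LL p"
  by (simp add: LL_def)

lemma KK_bound: assumes p: "p \<in> Ytot" shows "KK p \<le> 2 / pi"
proof -
  obtain z x where pz: "p = (z,x)" by (cases p) blast
  have z: "cmod z < 1" and x: "x \<in> X1" using p pz by (auto simp: Ytot_iff)
  define s where "s = sqrt (1 - (cmod z)^2)"
  have z2: "(cmod z)^2 < 1" using z by (simp add: abs_square_less_1)
  have sp: "0 < s" using z2 by (simp add: s_def)
  have s2: "s^2 = 1 - (cmod z)^2" using z2 by (simp add: s_def)
  define g0 where "g0 = (1 / complex_of_real s, - z / complex_of_real s)"
  have g0: "g0 \<in> su11"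
  proof -
    have "(cmod (1 / complex_of_real s))^2 - (cmod (- z / complex_of_real s))^2 = (1 - (cmod z)^2) / s^2"
      using sp by (simp add: norm_divide power_divide diff_divide_distrib)
    also have "\<dots> = 1" using s2 sp z2 by simp
    finally show ?thesis by (simp add: su11_def g0_def)
  qed
  have m0: "mob g0 z = 0" by (simp add: mob_def g0_def)
  have "KK p = KK (0, arcact g0 x)" using KK_inv_su11[OF g0 p] m0 pz by simp
  also have "\<dots> \<le> 2 / pi"
  proof (cases "nonpole (arcact g0 x)")
    case True
    have "KK (0, arcact g0 x) = cmod (bb (arcact g0 x) - aa (arcact g0 x)) / pi"
      unfolding KK_def using Ph1_nonpole[of "(0, arcact g0 x)"] True nonpole_facts(2)[OF True] bb_unit[OF True]
      by (simp del: Ph.simps)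
    also have "\<dots> \<le> 2 / pi"
    proof -
      have "cmod (bb (arcact g0 x) - aa (arcact g0 x)) \<le> 2"
        using norm_triangle_ineq4[of "bb (arcact g0 x)" "aa (arcact g0 x)"] nonpole_facts(2)[OF True] bb_unit[OF True] by simp
      then show ?thesis by (simp add: divide_right_mono)
    qed
    finally show ?thesis .
  next
    case False
    have "arcact g0 x \<in> X1" using arcact_X1[OF g0 x] .
    then have "arcact g0 x = pole1 \<or> arcact g0 x = pole2" using False by (auto simp: nonpole_def)
    then have "Ph (Suc 0) (0, arcact g0 x) = 0" using Ph_pole_const(2) by blast
    then show ?thesis by (simp add: KK_def del: Ph.simps)
  qed
  finally show ?thesis .
qed

lemma LL_bound: assumes p: "p \<in> Ytot" shows "LL p \<le> 2 / pi^2"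
proof -
  have "(KK p)^2 \<le> (2/pi)^2" using KK_bound[OF p] KK_nonneg[OF p] by (intro power_mono) auto
  then show ?thesis unfolding LL_KK by (simp add: power_divide)
qed

lemma LL_cont: "continuous_on Ytot LL"
  unfolding LL_def by (intro continuous_intros Ph_cont) auto

lemma some_in: assumes G: "grp G" and c: "c \<in> Mspace G"
  shows "(SOME p. p \<in> c \<inter> Ytot) \<in> Ytot" "c = Mproj G (SOME p. p \<in> c \<inter> Ytot)"
proof -
  obtain p where p: "p \<in> Ytot" "c = Mproj G p" using c by (auto simp: Mspace_def)
  have "p \<in> c \<inter> Ytot" using Mproj_self[OF G p(1)] p by simp
  then have q: "(SOME p. p \<in> c \<inter> Ytot) \<in> c \<inter> Ytot" by (rule someI)
  then show "(SOME p. p \<in> c \<inter> Ytot) \<in> Ytot" by simp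
  have "Mproj G (SOME p. p \<in> c \<inter> Ytot) = Mproj G p" using Mproj_eq[OF G p(1)] q p(2) by simp
  then show "c = Mproj G (SOME p. p \<in> c \<inter> Ytot)" using p by simp
qed

lemma qlift_meas: fixes f :: "complex \<times> (complex \<times> real) \<Rightarrow> real" assumes G: "grp G" and f: "invariant G f" and c: "continuous_on Ytot f"
  and sp: "space m = Mspace G" and st: "sets m = sigma_sets (Mspace G) {U. openin (Mtop G) U}"
  shows "qlift f \<in> borel_measurable m"
proof (rule borel_measurableI)
  fix S :: "real set" assume S: "open S"
  have "qlift f -` S \<inter> space m = {c \<in> Mspace G. qlift f c \<in> S}" using sp by auto
  moreover have "openin (Mtop G) {c \<in> Mspace G. qlift f c \<in> S}" by (rule qlift_open[OF G f c S])
  ultimately show "qlift f -` S \<inter> space m \<in> sets m" using st by (auto intro: sigma_sets.Basic)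
qed

theorem mainTheorem7:
  fixes \<Gamma> :: "(complex \<times> complex) set"
    and m :: "(complex \<times> (complex \<times> real)) set measure"
  assumes "cocompact_surface_group \<Gamma>"
    and "harmonic_measure \<Gamma> m"
  shows "msupport \<Gamma> m \<subseteq> leafS1 \<Gamma> \<union> leafS2 \<Gamma>"
proof -
  have G: "grp \<Gamma>" using assms(1) by (rule csg_grp)
  have fm: "finite_measure m" and sp: "space m = Mspace \<Gamma>"
    and st: "sets m = sigma_sets (Mspace \<Gamma>) {U. openin (Mtop \<Gamma>) U}"
    and harm: "\<And>h. continuous_map (Mtop \<Gamma>) euclideanreal h \<and> leaf_smooth (h \<circ> Mproj \<Gamma>) \<Longrightarrow> integral\<^sup>L m (lapM \<Gamma> h) = 0"
    using assms(2) unfolding harmonic_measure_def by auto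
  define h where "h = qlift vv"
  have hc: "continuous_map (Mtop \<Gamma>) euclideanreal h"
    unfolding h_def by (rule qlift_cont[OF G vv_invariant[OF G] vv_cont])
  have hF: "\<forall>q\<in>Ytot. (h \<circ> Mproj \<Gamma>) q = EvL (Lof []) q"
    using qlift_Mproj[OF G vv_invariant[OF G]] vv_EvL by (simp add: h_def)
  have ls: "leaf_smooth (h \<circ> Mproj \<Gamma>)" by (rule leaf_smooth_EvL[OF hF])
  have I0: "integral\<^sup>L m (lapM \<Gamma> h) = 0" using harm hc ls by blast
  have lap: "lapM \<Gamma> h c = qlift LL c" if "c \<in> space m" for c
  proof -
    have "c \<in> Mspace \<Gamma>" using that sp by simp
    then have "(SOME p. p \<in> c \<inter> Ytot) \<in> Ytot" by (rule some_in(1)[OF G])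
    then show ?thesis unfolding lapM_def qlift_def by (rule hlap_EvL[OF hF])
  qed
  have "integral\<^sup>L m (lapM \<Gamma> h) = integral\<^sup>L m (qlift LL)"
    by (rule Bochner_Integration.integral_cong[OF refl]) (rule lap)
  then have I1: "integral\<^sup>L m (qlift LL) = 0" using I0 by simp
  have meas: "qlift LL \<in> borel_measurable m" by (rule qlift_meas[OF G LL_invariant[OF G] LL_cont sp st])
  have bnd: "0 \<le> qlift LL c \<and> qlift LL c \<le> 2 / pi^2" if "c \<in> space m" for c
  proof -
    have c: "c \<in> Mspace \<Gamma>" using that sp by simp
    have "(SOME p. p \<in> c \<inter> Ytot) \<in> Ytot" by (rule some_in(1)[OF G c])
    then show ?thesis unfolding qlift_def using LL_nonneg LL_bound by auto
  qed
  have integ: "integrable m (qlift LL)"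
    by (rule finite_measure.integrable_const_bound[OF fm, where B = "2 / pi^2"]) (use bnd meas in auto)
  have "AE x in m. qlift LL x = 0"
    using integral_nonneg_eq_0_iff_AE[OF integ] I1 bnd by auto
  then have ae: "AE x in m. \<not> (qlift LL x \<in> {0<..})" by (rule eventually_mono) auto
  define U where "U = {c \<in> Mspace \<Gamma>. qlift LL c \<in> {0<..}}"
  have Uo: "openin (Mtop \<Gamma>) U" unfolding U_def by (rule qlift_open[OF G LL_invariant[OF G] LL_cont]) simp
  have Us: "U \<in> sets m" using Uo st by (auto intro: sigma_sets.Basic)
  have eq: "{x \<in> space m. \<not> \<not> (qlift LL x \<in> {0<..})} = U" using sp by (simp add: U_def)
  have "(AE x in m. \<not> (qlift LL x \<in> {0<..})) = (emeasure m U = 0)" by (rule AE_iff_measurable[OF Us eq])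
  then have U0: "emeasure m U = 0" using ae by simp
  show ?thesis
  proof
    fix c assume c: "c \<in> msupport \<Gamma> m"
    then have cM: "c \<in> Mspace \<Gamma>" and pos: "\<And>V. openin (Mtop \<Gamma>) V \<Longrightarrow> c \<in> V \<Longrightarrow> emeasure m V > 0"
      by (auto simp: msupport_def)
    obtain p where p: "p \<in> Ytot" "c = Mproj \<Gamma> p" using cM by (auto simp: Mspace_def)
    show "c \<in> leafS1 \<Gamma> \<union> leafS2 \<Gamma>"
    proof (cases "nonpole (snd p)")
      case True
      have "qlift LL c = LL p" using qlift_Mproj[OF G LL_invariant[OF G] p(1)] p(2) by simp
      then have "c \<in> U" using LL_pos[OF p(1) True] cM by (simp add: U_def)
      then have "emeasure m U > 0" by (rule pos[OF Uo])
      then show ?thesis using U0 by simp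
    next
      case False
      have "snd p \<in> X1" "fst p \<in> disc" using p(1) by (auto simp: Ytot_iff disc_def)
      then have "snd p = pole1 \<or> snd p = pole2" using False by (auto simp: nonpole_def)
      then have "p \<in> disc \<times> {pole1} \<or> p \<in> disc \<times> {pole2}" using \<open>fst p \<in> disc\<close> by (cases p) auto
      then have "c \<in> Mproj \<Gamma> ` (disc \<times> {pole1}) \<or> c \<in> Mproj \<Gamma> ` (disc \<times> {pole2})" using p(2) by blast
      then show ?thesis unfolding leafS1_def leafS2_def by blast
    qed
  qed
qed

end
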